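(* Let $D$ be a power of two and $R\ge D$. If $\mathcal{A}_{\mathsf{1LD}\text{-}\mathsf{d}}$ is a quantum algorithm for $\mathsf{1LD}$ making at most $q$ queries to its oracle, then there is a $\mathsf{1LD}$-search algorithm $\mathcal{A}_{\mathsf{1LD}\text{-}\mathsf{s}}$ making at most $3q\lg D$ queries to its oracle such that \[\mathsf{Adv}^{\mathsf{1LD}\text{-}\mathsf{s}}_{D,R}(\mathcal{A}_{\mathsf{1LD}\text{-}\mathsf{s}})\ge 1-D^2/R-1.5(\lg D-2)\bigl(1-\mathsf{Adv}^{\mathsf{1LD}\text{-}\mathsf{d}}_{D,R}(\mathcal{A}_{\mathsf{1LD}\text{-}\mathsf{d}})\bigr).\]
   Context: $[n]=\{1,\dots,n\}$ and $\lg$ is the base-2 logarithm. Instances are $L:[D]\to[R]$, accessed via the quantum oracle $|x,y\rangle\mapsto|x,y\oplus L(x)\rangle$, and viewed as the lists $L_b(x)=L(x+bD/2)$ for $x\in[D/2]$. $\mathsf{1LD}$: - instances: $L_0,L_1$ injective with images sharing at most one element; - language: exactly one shared element; - witnesses: $(x,y)$ with $L_0(x)=L_1(y)$. For a decision algorithm $\mathcal{B}$, let $P^1=\min_{L\in\text{language}}\Pr[\mathcal{B}[L]=1]$ and $P^0=\max_{L\in\text{instances}\setminus\text{language}}\Pr[\mathcal{B}[L]=1]$. Define $\mathsf{Adv}^{\mathsf{1LD}\text{-}\mathsf{d}}_{D,R}(\mathcal{B})=\min\{2P^1-1,\,1-2P^0\}$. The search advantage $\mathsf{Adv}^{\mathsf{1LD}\text{-}\mathsf{s}}_{D,R}$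 is the minimum, over instances in the language, of the probability of outputting a witness. *)

theory Defs
  imports Complex_Main "HOL-Library.FuncSet"
begin

text \<open>Computational basis states are triples (x, y, w): the query input register
  x \<in> [D] = {1..D}, the query output register y \<in> {0..<R}, and a workspace
  register w \<in> {0..<m}.  Vectors and matrices are complex-valued functions on
  basis triples; only entries indexed by the finite basis set matter.\<close>

type_synonym basis = "nat \<times> nat \<times> nat"
type_synonym qmat = "basis \<Rightarrow> basis \<Rightarrow> complex"
type_synonym qvec = "basis \<Rightarrow> complex"

definition Bas :: "nat \<Rightarrow> nat \<Rightarrow> nat \<Rightarrow> basis set" where
  "Bas D R m = {1..D} \<times> {0..<R} \<times> {0..<m}"

definition apply_mat :: "basis set \<Rightarrow> qmat \<Rightarrow> qvec \<Rightarrow> qvec" where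
  "apply_mat B U v = (\<lambda>i. \<Sum>j\<in>B. U i j * v j)"

definition unitary_on :: "basis set \<Rightarrow> qmat \<Rightarrow> bool" where
  "unitary_on B U \<longleftrightarrow>
     (\<forall>i\<in>B. \<forall>j\<in>B. (\<Sum>k\<in>B. cnj (U k i) * U k j) = (if i = j then 1 else 0))"

definition oracle_mat :: "nat \<Rightarrow> (nat \<Rightarrow> nat) \<Rightarrow> qmat" where
  "oracle_mat R L = (\<lambda>(x', y', w') (x, y, w).
      if x' = x \<and> w' = w \<and> y' = (y + L x) mod R then 1 else 0)"

text \<open>An algorithm: workspace size, unitaries U_0, U_1, ..., U_q (oracle calls
  are interleaved between consecutive unitaries), and a classical output
  function applied to the measured basis state.\<close>
record 'o qalg =
  ws :: nat
  ops :: "qmat list"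
  out :: "basis \<Rightarrow> 'o"

definition num_queries :: "'o qalg \<Rightarrow> nat" where
  "num_queries A = length (ops A) - 1"

definition valid_qalg :: "nat \<Rightarrow> nat \<Rightarrow> 'o qalg \<Rightarrow> bool" where
  "valid_qalg D R A \<longleftrightarrow> ops A \<noteq> [] \<and> ws A \<ge> 1 \<and>
     (\<forall>U\<in>set (ops A). unitary_on (Bas D R (ws A)) U)"

fun run_ops :: "basis set \<Rightarrow> qmat \<Rightarrow> qmat list \<Rightarrow> qvec \<Rightarrow> qvec" where
  "run_ops B Orc [] v = v"
| "run_ops B Orc (U # Us) v = run_ops B Orc Us (apply_mat B U (apply_mat B Orc v))"

definition init_state :: qvec where
  "init_state = (\<lambda>b. if b = (1, 0, 0) then 1 else 0)"

definition final_state :: "nat \<Rightarrow> nat \<Rightarrow> (nat \<Rightarrow> nat) \<Rightarrow> 'o qalg \<Rightarrow> qvec" where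
  "final_state D R L A =
     (let B = Bas D R (ws A) in
      run_ops B (oracle_mat R L) (tl (ops A)) (apply_mat B (hd (ops A)) init_state))"

definition prob_out :: "nat \<Rightarrow> nat \<Rightarrow> (nat \<Rightarrow> nat) \<Rightarrow> 'o qalg \<Rightarrow> ('o \<Rightarrow> bool) \<Rightarrow> real" where
  "prob_out D R L A P =
     (\<Sum>b\<in>Bas D R (ws A). if P (out A b) then (cmod (final_state D R L A b))\<^sup>2 else 0)"

definition lst :: "nat \<Rightarrow> (nat \<Rightarrow> nat) \<Rightarrow> nat \<Rightarrow> nat \<Rightarrow> nat" where
  "lst D L b x = L (x + b * (D div 2))"

definition lst_img :: "nat \<Rightarrow> (nat \<Rightarrow> nat) \<Rightarrow> nat \<Rightarrow> nat set" where
  "lst_img D L b = lst D L b ` {1..D div 2}"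

definition inst_1LD :: "nat \<Rightarrow> nat \<Rightarrow> (nat \<Rightarrow> nat) \<Rightarrow> bool" where
  "inst_1LD D R L \<longleftrightarrow> L \<in> {1..D} \<rightarrow>\<^sub>E {1..R} \<and>
     inj_on (lst D L 0) {1..D div 2} \<and> inj_on (lst D L 1) {1..D div 2} \<and>
     card (lst_img D L 0 \<inter> lst_img D L 1) \<le> 1"

definition lang_1LD :: "nat \<Rightarrow> nat \<Rightarrow> (nat \<Rightarrow> nat) \<Rightarrow> bool" where
  "lang_1LD D R L \<longleftrightarrow> inst_1LD D R L \<and> card (lst_img D L 0 \<inter> lst_img D L 1) = 1"

definition witness_1LD :: "nat \<Rightarrow> (nat \<Rightarrow> nat) \<Rightarrow> nat \<times> nat \<Rightarrow> bool" where
  "witness_1LD D L w \<longleftrightarrow> (case w of (x, y) \<Rightarrow>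
     x \<in> {1..D div 2} \<and> y \<in> {1..D div 2} \<and> lst D L 0 x = lst D L 1 y)"

definition adv_1LD_d :: "nat \<Rightarrow> nat \<Rightarrow> bool qalg \<Rightarrow> real" where
  "adv_1LD_d D R A =
     (let P1 = Inf {prob_out D R L A (\<lambda>r. r) | L. lang_1LD D R L};
          P0 = Sup {prob_out D R L A (\<lambda>r. r) | L. inst_1LD D R L \<and> \<not> lang_1LD D R L}
      in min (2 * P1 - 1) (1 - 2 * P0))"

definition adv_1LD_s :: "nat \<Rightarrow> nat \<Rightarrow> (nat \<times> nat) qalg \<Rightarrow> real" where
  "adv_1LD_s D R A = Inf {prob_out D R L A (witness_1LD D L) | L. lang_1LD D R L}"

end

theory Submission
  imports Defs
begin


definition mm :: "basis set \<Rightarrow> qmat \<Rightarrow> qmat \<Rightarrow> qmat" where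
  "mm B U V = (\<lambda>i j. \<Sum>l\<in>B. U i l * V l j)"

definition Perm :: "(basis \<Rightarrow> basis) \<Rightarrow> qmat" where
  "Perm \<sigma> = (\<lambda>i j. if i = \<sigma> j then 1 else 0)"

definition nrm :: "basis set \<Rightarrow> qvec \<Rightarrow> real" where
  "nrm B v = (\<Sum>b\<in>B. (cmod (v b))\<^sup>2)"

lemma apply_mm:
  assumes "finite B"
  shows "apply_mat B (mm B U V) v = apply_mat B U (apply_mat B V v)"
proof
  fix i
  have "apply_mat B (mm B U V) v i = (\<Sum>j\<in>B. \<Sum>l\<in>B. U i l * V l j * v j)"
    by (simp add: apply_mat_def mm_def sum_distrib_right)
  also have "\<dots> = (\<Sum>l\<in>B. \<Sum>j\<in>B. U i l * (V l j * v j))"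
    by (subst sum.swap) (simp add: mult.assoc)
  also have "\<dots> = apply_mat B U (apply_mat B V v) i"
    by (simp add: apply_mat_def sum_distrib_left)
  finally show "apply_mat B (mm B U V) v i = apply_mat B U (apply_mat B V v) i" .
qed

lemma apply_cong:
  assumes "\<And>b. b \<in> B \<Longrightarrow> v b = w b"
  shows "apply_mat B U v = apply_mat B U w"
  unfolding apply_mat_def using assms by (intro ext sum.cong) auto

lemma unitary_mm:
  assumes "finite B" "unitary_on B U" "unitary_on B V"
  shows "unitary_on B (mm B U V)"
  unfolding unitary_on_def
proof (intro ballI)
  fix i j assume ij: "i \<in> B" "j \<in> B"
  have "(\<Sum>k\<in>B. cnj (mm B U V k i) * mm B U V k j)
      = (\<Sum>k\<in>B. \<Sum>l\<in>B. \<Sum>l'\<in>B. (cnj (V l i) * V l' j) * (cnj (U k l) * U k l'))"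
    by (simp add: mm_def sum_distrib_left sum_distrib_right cnj_sum mult_ac)
  also have "\<dots> = (\<Sum>l\<in>B. \<Sum>l'\<in>B. (cnj (V l i) * V l' j) * (\<Sum>k\<in>B. cnj (U k l) * U k l'))"
    by (subst sum.swap, rule sum.cong, simp, subst sum.swap, simp add: sum_distrib_left)
  also have "\<dots> = (\<Sum>l\<in>B. \<Sum>l'\<in>B. (cnj (V l i) * V l' j) * (if l = l' then 1 else 0))"
    using assms(2) unfolding unitary_on_def by (intro sum.cong refl) auto
  also have "\<dots> = (\<Sum>l\<in>B. cnj (V l i) * V l j)"
    using assms(1) by (simp add: if_distrib cong: if_cong)
  also have "\<dots> = (if i = j then 1 else 0)"
    using assms(3) ij unfolding unitary_on_def by auto
  finally show "(\<Sum>k\<in>B. cnj (mm B U V k i) * mm B U V k j) = (if i = j then 1 else 0)" .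
qed

lemma unitary_Perm:
  assumes "finite B" "\<And>b. b \<in> B \<Longrightarrow> \<sigma> b \<in> B" "inj_on \<sigma> B"
  shows "unitary_on B (Perm \<sigma>)"
  unfolding unitary_on_def
proof (intro ballI)
  fix i j assume ij: "i \<in> B" "j \<in> B"
  have "(\<Sum>k\<in>B. cnj (Perm \<sigma> k i) * Perm \<sigma> k j) = (\<Sum>k\<in>B. if k = \<sigma> i \<and> \<sigma> i = \<sigma> j then 1 else 0)"
    by (intro sum.cong) (auto simp: Perm_def)
  also have "\<dots> = (if \<sigma> i = \<sigma> j then 1 else 0)"
    using assms(1,2) ij by (simp add: sum.If_cases)
  also have "\<dots> = (if i = j then 1 else 0)"
    using assms(3) ij by (auto dest: inj_onD)
  finally show "(\<Sum>k\<in>B. cnj (Perm \<sigma> k i) * Perm \<sigma> k j) = (if i = j then 1 else 0)" .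
qed

lemma apply_Perm:
  assumes "finite B" "inj_on \<sigma> B" "j0 \<in> B" "\<sigma> j0 = b"
  shows "apply_mat B (Perm \<sigma>) v b = v j0"
proof -
  have "apply_mat B (Perm \<sigma>) v b = (\<Sum>j\<in>B. if j = j0 then v j else 0)"
    unfolding apply_mat_def Perm_def
    by (intro sum.cong refl) (use assms in \<open>auto dest: inj_onD\<close>)
  also have "\<dots> = v j0" using assms by simp
  finally show ?thesis .
qed

lemma cmod_sq_cnj: "complex_of_real ((cmod z)\<^sup>2) = cnj z * z"
  by (metis complex_norm_square mult.commute)

lemma nrm_unitary:
  assumes "finite B" "unitary_on B U"
  shows "nrm B (apply_mat B U v) = nrm B v"
proof -
  have "complex_of_real (nrm B (apply_mat B U v))
      = (\<Sum>i\<in>B. \<Sum>j\<in>B. \<Sum>j'\<in>B. (cnj (v j) * v j') * (cnj (U i j) * U i j'))"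
    unfolding nrm_def of_real_sum cmod_sq_cnj
    by (simp add: apply_mat_def cnj_sum sum_distrib_left sum_distrib_right mult_ac)
  also have "\<dots> = (\<Sum>j\<in>B. \<Sum>j'\<in>B. (cnj (v j) * v j') * (\<Sum>i\<in>B. cnj (U i j) * U i j'))"
    by (subst sum.swap, rule sum.cong, simp, subst sum.swap, simp add: sum_distrib_left)
  also have "\<dots> = (\<Sum>j\<in>B. \<Sum>j'\<in>B. (cnj (v j) * v j') * (if j = j' then 1 else 0))"
    using assms(2) unfolding unitary_on_def by (intro sum.cong refl) auto
  also have "\<dots> = (\<Sum>j\<in>B. cnj (v j) * v j)"
    using assms(1) by (simp add: if_distrib cong: if_cong)
  also have "\<dots> = complex_of_real (nrm B v)"
    unfolding nrm_def of_real_sum cmod_sq_cnj ..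
  finally show ?thesis by (simp only: of_real_eq_iff)
qed


definition liftb :: "nat \<Rightarrow> nat \<Rightarrow> basis \<Rightarrow> basis" where
  "liftb m u b = (case b of (x, y, a) \<Rightarrow> (x, y, a + m * u))"

lemma finite_Bas[simp]: "finite (Bas D R m)"
  by (simp add: Bas_def)

lemma mem_Bas: "(x, y, w) \<in> Bas D R m \<longleftrightarrow> 1 \<le> x \<and> x \<le> D \<and> y < R \<and> w < m"
  by (auto simp: Bas_def)

lemma liftb_in: "m > 0 \<Longrightarrow> u < K \<Longrightarrow> b \<in> Bas D R m \<Longrightarrow> liftb m u b \<in> Bas D R (m * K)"
proof -
  assume a: "m > 0" "u < K" "b \<in> Bas D R m"
  obtain x y w where b: "b = (x, y, w)" by (cases b) auto
  have "w + m * u < m * K"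
  proof -
    have "w + m * u < m + m * u" using a b by (simp add: mem_Bas)
    also have "\<dots> = m * (u + 1)" by simp
    also have "\<dots> \<le> m * K" using a by (intro mult_le_mono2) simp
    finally show ?thesis .
  qed
  then show ?thesis using a b by (simp add: liftb_def mem_Bas)
qed

lemma Bas_split_image:
  assumes "m > 0"
  shows "Bas D R (m * K) = (\<lambda>(u, b). liftb m u b) ` ({..<K} \<times> Bas D R m)"
proof
  show "(\<lambda>(u, b). liftb m u b) ` ({..<K} \<times> Bas D R m) \<subseteq> Bas D R (m * K)"
    using liftb_in[OF assms] by auto
next
  show "Bas D R (m * K) \<subseteq> (\<lambda>(u, b). liftb m u b) ` ({..<K} \<times> Bas D R m)"
  proof
    fix b assume b: "b \<in> Bas D R (m * K)"
    obtain x y w where bb: "b = (x, y, w)" by (cases b) auto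
    have "w div m < K" using b bb assms by (simp add: mem_Bas less_mult_imp_div_less mult.commute)
    moreover have "(x, y, w mod m) \<in> Bas D R m" using b bb assms by (simp add: mem_Bas)
    moreover have "b = liftb m (w div m) (x, y, w mod m)" using bb by (simp add: liftb_def)
    ultimately show "b \<in> (\<lambda>(u, b). liftb m u b) ` ({..<K} \<times> Bas D R m)" by force
  qed
qed

lemma inj_liftb:
  assumes "m > 0"
  shows "inj_on (\<lambda>(u, b). liftb m u b) ({..<K} \<times> Bas D R m)"
proof (rule inj_onI)
  fix p q assume p: "p \<in> {..<K} \<times> Bas D R m" and q: "q \<in> {..<K} \<times> Bas D R m"
    and eq: "(\<lambda>(u, b). liftb m u b) p = (\<lambda>(u, b). liftb m u b) q"
  obtain u x y a where pp: "p = (u, x, y, a)" by (cases p) auto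
  obtain u' x' y' a' where qq: "q = (u', x', y', a')" by (cases q) auto
  have a: "a < m" "a' < m" using p q pp qq by (auto simp: mem_Bas)
  have e: "x = x'" "y = y'" "a + m * u = a' + m * u'" using eq pp qq by (auto simp: liftb_def)
  have "(a + m * u) div m = u" "(a + m * u) mod m = a" using a assms by auto
  moreover have "(a' + m * u') div m = u'" "(a' + m * u') mod m = a'" using a assms by auto
  ultimately show "p = q" using e pp qq by metis
qed

lemma sum_Bas_split:
  assumes "m > 0"
  shows "(\<Sum>b\<in>Bas D R (m * K). g b) = (\<Sum>u<K. \<Sum>b\<in>Bas D R m. g (liftb m u b))"
proof -
  have "(\<Sum>b\<in>Bas D R (m * K). g b) = (\<Sum>p\<in>{..<K} \<times> Bas D R m. g ((\<lambda>(u, b). liftb m u b) p))"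
    unfolding Bas_split_image[OF assms] by (rule sum.reindex[OF inj_liftb[OF assms], unfolded comp_def])
  also have "\<dots> = (\<Sum>u<K. \<Sum>b\<in>Bas D R m. g (liftb m u b))"
    by (simp add: sum.cartesian_product split_def)
  finally show ?thesis .
qed

lemma sum_nat_split:
  fixes g :: "nat \<Rightarrow> 'a::comm_monoid_add"
  assumes "a > 0"
  shows "(\<Sum>u<a * b. g u) = (\<Sum>u1<a. \<Sum>s<b. g (u1 + a * s))"
proof -
  have img: "{..<a * b} = (\<lambda>(u1, s). u1 + a * s) ` ({..<a} \<times> {..<b})"
  proof
    show "(\<lambda>(u1, s). u1 + a * s) ` ({..<a} \<times> {..<b}) \<subseteq> {..<a * b}"
    proof clarsimp
      fix u1 s assume "u1 < a" "s < b"
      then have "u1 + a * s < a + a * s" by simp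
      also have "\<dots> = a * (s + 1)" by simp
      also have "\<dots> \<le> a * b" using \<open>s < b\<close> by (intro mult_le_mono2) simp
      finally show "u1 + a * s < a * b" .
    qed
  next
    show "{..<a * b} \<subseteq> (\<lambda>(u1, s). u1 + a * s) ` ({..<a} \<times> {..<b})"
    proof
      fix u assume "u \<in> {..<a * b}"
      then have "u div a < b" "u mod a < a" using assms by (auto simp: less_mult_imp_div_less mult.commute)
      moreover have "u = u mod a + a * (u div a)" by simp
      ultimately show "u \<in> (\<lambda>(u1, s). u1 + a * s) ` ({..<a} \<times> {..<b})" by force
    qed
  qed
  have inj: "inj_on (\<lambda>(u1, s). u1 + a * s) ({..<a} \<times> {..<b})"
  proof (rule inj_onI, clarsimp)
    fix u1 s u1' s' assume h: "u1 < a" "u1' < a" "u1 + a * s = u1' + a * s'"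
    have "(u1 + a * s) div a = s" "(u1' + a * s') div a = s'"
      "(u1 + a * s) mod a = u1" "(u1' + a * s') mod a = u1'" using assms h(1,2) by auto
    then have "s = s'" using h(3) by simp
    then show "u1 = u1' \<and> s = s'" using h(3) by simp
  qed
  show ?thesis unfolding img
    by (subst sum.reindex[OF inj]) (simp add: sum.cartesian_product split_def)
qed

definition enc :: "nat \<Rightarrow> nat \<Rightarrow> basis \<Rightarrow> nat" where
  "enc D R b = (case b of (x, y, a) \<Rightarrow> (x - 1) + D * (y + R * a))"

definition dec :: "nat \<Rightarrow> nat \<Rightarrow> nat \<Rightarrow> basis" where
  "dec D R s = (s mod D + 1, (s div D) mod R, s div (D * R))"

lemma dec_enc:
  assumes "b \<in> Bas D R m"
  shows "dec D R (enc D R b) = b"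
proof -
  obtain x y a where b: "b = (x, y, a)" by (cases b) auto
  have h: "1 \<le> x" "x \<le> D" "y < R" "a < m" using assms b by (auto simp: mem_Bas)
  obtain x' where x': "x = Suc x'" using h by (cases x) auto
  have x'D: "x' < D" using h x' by simp
  have "(x - 1 + D * (y + R * a)) mod D = x - 1" using x'D x' by simp
  moreover have "(x - 1 + D * (y + R * a)) div D = y + R * a" using x'D x' by simp
  moreover have "(x - 1 + D * (y + R * a)) div (D * R) = (y + R * a) div R"
    by (metis calculation(2) div_mult2_eq)
  moreover have "(y + R * a) div R = a" using h by simp
  ultimately show ?thesis using b h by (simp add: enc_def dec_def)
qed

lemma enc_lt:
  assumes "b \<in> Bas D R m"
  shows "enc D R b < D * R * m"
proof -
  obtain x y a where b: "b = (x, y, a)" by (cases b) auto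
  have h: "1 \<le> x" "x \<le> D" "y < R" "a < m" using assms b by (auto simp: mem_Bas)
  have "y + R * a < R * (a + 1)" using h by simp
  moreover have "R * (a + 1) \<le> R * m" using h by (intro mult_le_mono2) simp
  ultimately have "y + R * a + 1 \<le> R * m" by linarith
  then have "D * (y + R * a + 1) \<le> D * (R * m)" by (rule mult_le_mono2)
  then have "x - 1 + D * (y + R * a) < D * (R * m)" using h by (simp add: algebra_simps)
  then show ?thesis using b by (simp add: enc_def mult.assoc)
qed

lemma dec_in:
  assumes "s < D * R * m"
  shows "dec D R s \<in> Bas D R m"
proof -
  have D0: "D > 0" and R0: "R > 0" using assms by (auto intro: Nat.gr0I)
  have "s div (D * R) < m" using assms by (simp add: less_mult_imp_div_less mult.commute)
  then show ?thesis using D0 R0 by (simp add: dec_def mem_Bas Suc_le_eq)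
qed

lemma enc_dec:
  assumes "s < D * R * m"
  shows "enc D R (dec D R s) = s"
proof -
  have D0: "D > 0" and R0: "R > 0" using assms by (auto intro: Nat.gr0I)
  have "s div D mod R + R * (s div (D * R)) = s div D"
    by (metis div_mult2_eq mod_mult_div_eq)
  then have "s mod D + D * (s div D mod R + R * (s div (D * R))) = s" by simp
  then show ?thesis using D0 by (simp add: enc_def dec_def)
qed

lemma bij_dec: "bij_betw (dec D R) {..<D * R * m} (Bas D R m)"
proof (rule bij_betw_byWitness[where f' = "enc D R"])
  show "\<forall>s\<in>{..<D * R * m}. enc D R (dec D R s) = s" using enc_dec by auto
  show "\<forall>b\<in>Bas D R m. dec D R (enc D R b) = b" using dec_enc by auto
  show "dec D R ` {..<D * R * m} \<subseteq> Bas D R m" using dec_in by auto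
  show "enc D R ` Bas D R m \<subseteq> {..<D * R * m}" using enc_lt by auto
qed

lemma sum_dec: "(\<Sum>s<D * R * m. g (dec D R s)) = (\<Sum>b\<in>Bas D R m. g b)"
  using sum.reindex_bij_betw[OF bij_dec, of g] .

lemma enc_zero_iff:
  assumes "b \<in> Bas D R m"
  shows "enc D R b = 0 \<longleftrightarrow> b = (1, 0, 0)"
proof -
  obtain x y a where b: "b = (x, y, a)" by (cases b) auto
  have h: "1 \<le> x" "x \<le> D" "y < R" "a < m" using assms b by (auto simp: mem_Bas)
  obtain x' where x': "x = Suc x'" using h by (cases x) auto
  have "D > 0" "R > 0" using h by auto
  then show ?thesis using b x' by (auto simp: enc_def)
qed


lemma mod_add_inj:
  fixes y y2 g R :: nat
  assumes "y < R" "y2 < R" "(y + g) mod R = (y2 + g) mod R"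
  shows "y = y2"
proof -
  have *: "a = b" if h: "a < R" "b < R" "(a + g) mod R = (b + g) mod R" "a \<le> b" for a b :: nat
  proof -
    obtain s where "b + g = a + g + R * s"
      using mod_eq_nat2E[OF h(3)] h(4) by auto
    then have "b = a + R * s" by simp
    then have "s = 0" using h by (cases s) auto
    then show ?thesis using \<open>b = a + R * s\<close> by simp
  qed
  show ?thesis
  proof (cases "y \<le> y2")
    case True then show ?thesis using * assms by blast
  next
    case False then show ?thesis using *[of y2 y] assms by simp
  qed
qed

definition ysol :: "nat \<Rightarrow> nat \<Rightarrow> nat \<Rightarrow> nat" where
  "ysol R g y' = (y' + (R - g mod R)) mod R"

lemma ysol_lt: "R > 0 \<Longrightarrow> ysol R g y' < R"
  by (simp add: ysol_def)

lemma ysol_eq: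
  assumes "R > 0" "y' < R"
  shows "(ysol R g y' + g) mod R = y'"
proof -
  have "(ysol R g y' + g) mod R = (y' + (R - g mod R) + g) mod R"
    by (simp add: ysol_def mod_add_left_eq)
  also have "\<dots> = (y' + (R - g mod R) + g mod R) mod R"
    by (metis mod_add_right_eq)
  also have "y' + (R - g mod R) + g mod R = y' + R"
  proof -
    have "g mod R < R" using assms by simp
    then show ?thesis by arith
  qed
  finally show ?thesis using assms by simp
qed

lemma ysol_unique:
  assumes "R > 0" "y' < R" "y < R" "(y + g) mod R = y'"
  shows "ysol R g y' = y"
proof -
  have "(ysol R g y' + g) mod R = (y + g) mod R" using ysol_eq[OF assms(1,2)] assms(4) by simp
  then show ?thesis using mod_add_inj[OF ysol_lt[OF assms(1)] assms(3)] by blast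
qed

lemma ysol_comp:
  assumes "R > 0" "y' < R"
  shows "ysol R g1 (ysol R g2 y') = ysol R (g1 + g2) y'"
proof (rule sym, rule ysol_unique[OF assms ysol_lt[OF assms(1)]])
  have "(ysol R g1 (ysol R g2 y') + (g1 + g2)) mod R = ((ysol R g1 (ysol R g2 y') + g1) mod R + g2) mod R"
    by (simp add: mod_add_left_eq add.assoc)
  also have "\<dots> = (ysol R g2 y' + g2) mod R"
    using ysol_eq[OF assms(1) ysol_lt[OF assms(1)]] by simp
  also have "\<dots> = y'" using ysol_eq[OF assms] .
  finally show "(ysol R g1 (ysol R g2 y') + (g1 + g2)) mod R = y'" .
qed

lemma ysol_mod: "ysol R (g mod R) y' = ysol R g y'"
  by (simp add: ysol_def)

definition OrcG :: "nat \<Rightarrow> (nat \<Rightarrow> nat \<Rightarrow> nat) \<Rightarrow> qmat" where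
  "OrcG R G = Perm (\<lambda>(x, y, w). (x, (y + G w x) mod R, w))"

lemma oracle_OrcG: "oracle_mat R L = OrcG R (\<lambda>w x. L x)"
  by (intro ext) (auto simp: oracle_mat_def OrcG_def Perm_def split: if_splits)

lemma OrcG_inj:
  assumes "R > 0"
  shows "inj_on (\<lambda>(x, y, w). (x, (y + G w x) mod R, w)) (Bas D R M)"
proof (rule inj_onI)
  fix p q assume p: "p \<in> Bas D R M" and q: "q \<in> Bas D R M"
    and e: "(\<lambda>(x, y, w). (x, (y + G w x) mod R, w)) p = (\<lambda>(x, y, w). (x, (y + G w x) mod R, w)) q"
  obtain x y w where pp: "p = (x, y, w)" by (cases p) auto
  obtain x2 y2 w2 where qq: "q = (x2, y2, w2)" by (cases q) auto
  have "x = x2" "w = w2" "(y + G w x) mod R = (y2 + G w x) mod R" using e pp qq by auto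
  moreover have "y < R" "y2 < R" using p q pp qq by (auto simp: mem_Bas)
  ultimately show "p = q" using mod_add_inj pp qq by metis
qed

lemma unitary_OrcG:
  assumes "R > 0"
  shows "unitary_on (Bas D R M) (OrcG R G)"
  unfolding OrcG_def
  by (rule unitary_Perm[OF finite_Bas _ OrcG_inj[OF assms]]) (auto simp: mem_Bas assms)

lemma apply_OrcG:
  assumes "R > 0" "(x', y', w') \<in> Bas D R M"
  shows "apply_mat (Bas D R M) (OrcG R G) v (x', y', w') = v (x', ysol R (G w' x') y', w')"
  unfolding OrcG_def
proof (rule apply_Perm[OF finite_Bas OrcG_inj[OF assms(1)]])
  show "(x', ysol R (G w' x') y', w') \<in> Bas D R M"
    using assms by (auto simp: mem_Bas ysol_lt)
  show "(case (x', ysol R (G w' x') y', w') of (x, y, w) \<Rightarrow> (x, (y + G w x) mod R, w)) = (x', y', w')"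
    using ysol_eq[OF assms(1)] assms(2) by (simp add: mem_Bas)
qed

lemma OrcG_comp:
  assumes "R > 0" "b \<in> Bas D R M"
  shows "apply_mat (Bas D R M) (OrcG R G2) (apply_mat (Bas D R M) (OrcG R G1) v) b
       = apply_mat (Bas D R M) (OrcG R (\<lambda>w x. G1 w x + G2 w x)) v b"
proof -
  obtain x y w where bb: "b = (x, y, w)" by (cases b) auto
  have b2: "(x, ysol R (G2 w x) y, w) \<in> Bas D R M" using assms bb by (auto simp: mem_Bas ysol_lt)
  show ?thesis using assms bb
    by (simp add: apply_OrcG[OF assms(1)] apply_OrcG[OF assms(1) b2] ysol_comp mem_Bas)
qed

definition Lift :: "nat \<Rightarrow> qmat \<Rightarrow> qmat" where
  "Lift m U = (\<lambda>(x', y', w') (x, y, w).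
     if w' div m = w div m then U (x', y', w' mod m) (x, y, w mod m) else 0)"

lemma Lift_liftb1:
  assumes "b \<in> Bas D R m"
  shows "Lift m U (x', y', w') (liftb m u b) = (if w' div m = u then U (x', y', w' mod m) b else 0)"
proof -
  obtain x y a where bb: "b = (x, y, a)" by (cases b) auto
  have "a < m" using assms bb by (simp add: mem_Bas)
  then show ?thesis using bb by (simp add: Lift_def liftb_def)
qed

lemma Lift_liftb2:
  assumes "b \<in> Bas D R m"
  shows "Lift m U (liftb m u b) (x, y, w) = (if u = w div m then U b (x, y, w mod m) else 0)"
proof -
  obtain x' y' a where bb: "b = (x', y', a)" by (cases b) auto
  have "a < m" using assms bb by (simp add: mem_Bas)
  then show ?thesis using bb by (simp add: Lift_def liftb_def)
qed

lemma apply_Lift: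
  assumes "m > 0" "w' div m < K"
  shows "apply_mat (Bas D R (m * K)) (Lift m U) v (x', y', w')
       = (\<Sum>b\<in>Bas D R m. U (x', y', w' mod m) b * v (liftb m (w' div m) b))"
proof -
  have "apply_mat (Bas D R (m * K)) (Lift m U) v (x', y', w')
     = (\<Sum>u<K. \<Sum>b\<in>Bas D R m. Lift m U (x', y', w') (liftb m u b) * v (liftb m u b))"
    unfolding apply_mat_def by (rule sum_Bas_split[OF assms(1)])
  also have "\<dots> = (\<Sum>u<K. if u = w' div m then (\<Sum>b\<in>Bas D R m. U (x', y', w' mod m) b * v (liftb m u b)) else 0)"
  proof (intro sum.cong refl)
    fix u assume "u \<in> {..<K}"
    show "(\<Sum>b\<in>Bas D R m. Lift m U (x', y', w') (liftb m u b) * v (liftb m u b))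
        = (if u = w' div m then (\<Sum>b\<in>Bas D R m. U (x', y', w' mod m) b * v (liftb m u b)) else 0)"
      by (auto intro!: sum.cong sum.neutral simp: Lift_liftb1)
  qed
  also have "\<dots> = (\<Sum>b\<in>Bas D R m. U (x', y', w' mod m) b * v (liftb m (w' div m) b))"
    using assms by simp
  finally show ?thesis .
qed

lemma unitary_Lift:
  assumes "m > 0" "unitary_on (Bas D R m) U"
  shows "unitary_on (Bas D R (m * K)) (Lift m U)"
  unfolding unitary_on_def
proof (intro ballI)
  fix i j assume i: "i \<in> Bas D R (m * K)" and j: "j \<in> Bas D R (m * K)"
  obtain xi yi wi where ii: "i = (xi, yi, wi)" by (cases i) auto
  obtain xj yj wj where jj: "j = (xj, yj, wj)" by (cases j) auto
  have iA: "(xi, yi, wi mod m) \<in> Bas D R m" and jA: "(xj, yj, wj mod m) \<in> Bas D R m"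
    using i j ii jj assms by (auto simp: mem_Bas)
  have "(\<Sum>k\<in>Bas D R (m * K). cnj (Lift m U k i) * Lift m U k j)
      = (\<Sum>u<K. \<Sum>b\<in>Bas D R m. cnj (Lift m U (liftb m u b) i) * Lift m U (liftb m u b) j)"
    by (rule sum_Bas_split[OF assms(1)])
  also have "\<dots> = (\<Sum>u<K. if u = wi div m \<and> u = wj div m then
        (\<Sum>b\<in>Bas D R m. cnj (U b (xi, yi, wi mod m)) * U b (xj, yj, wj mod m)) else 0)"
  proof (intro sum.cong refl)
    fix u assume "u \<in> {..<K}"
    show "(\<Sum>b\<in>Bas D R m. cnj (Lift m U (liftb m u b) i) * Lift m U (liftb m u b) j) =
      (if u = wi div m \<and> u = wj div m then
        (\<Sum>b\<in>Bas D R m. cnj (U b (xi, yi, wi mod m)) * U b (xj, yj, wj mod m)) else 0)"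
      unfolding ii jj by (auto intro!: sum.cong sum.neutral simp: Lift_liftb2)
  qed
  also have "\<dots> = (if wi div m = wj div m then
        (\<Sum>b\<in>Bas D R m. cnj (U b (xi, yi, wi mod m)) * U b (xj, yj, wj mod m)) else 0)"
  proof -
    have "wi div m < K" using i ii assms by (simp add: mem_Bas less_mult_imp_div_less mult.commute)
    then show ?thesis by (auto simp: sum.If_cases)
  qed
  also have "\<dots> = (if i = j then 1 else 0)"
  proof -
    have "(wi div m = wj div m \<and> (xi, yi, wi mod m) = (xj, yj, wj mod m)) \<longleftrightarrow> i = j"
      using ii jj by (metis Pair_inject div_mult_mod_eq)
    then show ?thesis using assms(2) iA jA unfolding unitary_on_def by auto
  qed
  finally show "(\<Sum>k\<in>Bas D R (m * K). cnj (Lift m U k i) * Lift m U k j) = (if i = j then 1 else 0)" .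
qed

definition Fm :: "nat \<Rightarrow> nat \<Rightarrow> (nat \<Rightarrow> qvec) \<Rightarrow> (nat \<Rightarrow> complex) \<Rightarrow> qvec" where
  "Fm m R \<psi> \<Phi> = (\<lambda>(x, y, w). \<psi> ((w div m) mod R) (x, y, w mod m) * \<Phi> (w div m))"

lemma Fm_liftb:
  assumes "b \<in> Bas D R m"
  shows "Fm m R \<psi> \<Phi> (liftb m u b) = \<psi> (u mod R) b * \<Phi> u"
proof -
  obtain x y a where bb: "b = (x, y, a)" by (cases b) auto
  have "a < m" using assms bb by (simp add: mem_Bas)
  then show ?thesis using bb by (simp add: Fm_def liftb_def)
qed

lemma Lift_Fm:
  assumes "m > 0" "(x', y', w') \<in> Bas D R (m * K)"
  shows "apply_mat (Bas D R (m * K)) (Lift m U) (Fm m R \<psi> \<Phi>) (x', y', w')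
       = Fm m R (\<lambda>c. apply_mat (Bas D R m) U (\<psi> c)) \<Phi> (x', y', w')"
proof -
  have "w' div m < K" using assms by (simp add: mem_Bas less_mult_imp_div_less mult.commute)
  then have "apply_mat (Bas D R (m * K)) (Lift m U) (Fm m R \<psi> \<Phi>) (x', y', w')
      = (\<Sum>b\<in>Bas D R m. U (x', y', w' mod m) b * Fm m R \<psi> \<Phi> (liftb m (w' div m) b))"
    using apply_Lift[OF assms(1)] by blast
  also have "\<dots> = (\<Sum>b\<in>Bas D R m. U (x', y', w' mod m) b * (\<psi> ((w' div m) mod R) b * \<Phi> (w' div m)))"
    by (intro sum.cong refl) (simp add: Fm_liftb)
  also have "\<dots> = Fm m R (\<lambda>c. apply_mat (Bas D R m) U (\<psi> c)) \<Phi> (x', y', w')"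
    by (simp add: Fm_def apply_mat_def sum_distrib_left sum_distrib_right mult_ac)
  finally show ?thesis .
qed

lemma OrcG_Fm:
  assumes "m > 0" "R > 0" "(x', y', w') \<in> Bas D R (m * K)"
  shows "apply_mat (Bas D R (m * K)) (OrcG R (\<lambda>w x. H ((w div m) mod R) x)) (Fm m R \<psi> \<Phi>) (x', y', w')
       = Fm m R (\<lambda>c. apply_mat (Bas D R m) (OrcG R (\<lambda>w x. H c x)) (\<psi> c)) \<Phi> (x', y', w')"
proof -
  have inA: "(x', y', w' mod m) \<in> Bas D R m" using assms by (auto simp: mem_Bas)
  show ?thesis
    by (simp add: apply_OrcG[OF assms(2,3)] apply_OrcG[OF assms(2) inA] Fm_def)
qed


definition swp :: "nat \<Rightarrow> nat \<Rightarrow> nat \<Rightarrow> nat \<Rightarrow> basis \<Rightarrow> basis" where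
  "swp D R m P b = (case b of (x, y, w) \<Rightarrow>
     (let a = w mod m; u = w div m; N = D * R * m; lo = u mod P; s = (u div P) mod N;
          hi = u div P div N; b' = dec D R s
      in (fst b', fst (snd b'), snd (snd b') + m * (lo + P * (enc D R (x, y, a) + N * hi)))))"

lemma decomp_parts:
  fixes a m lo P s N hi :: nat
  assumes "a < m" "lo < P" "s < N"
  shows "(a + m * (lo + P * (s + N * hi))) mod m = a"
    and "(a + m * (lo + P * (s + N * hi))) div m = lo + P * (s + N * hi)"
    and "(lo + P * (s + N * hi)) mod P = lo"
    and "(lo + P * (s + N * hi)) div P = s + N * hi"
    and "(s + N * hi) mod N = s"
    and "(s + N * hi) div N = hi"
  using assms by auto

lemma decomp_exists:
  fixes w m P N :: nat
  assumes "m > 0" "P > 0" "N > 0"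
  shows "w = w mod m + m * ((w div m) mod P + P * ((w div m div P) mod N + N * (w div m div P div N)))"
proof -
  have "w div m div P = (w div m div P) mod N + N * (w div m div P div N)" by simp
  moreover have "w div m = (w div m) mod P + P * (w div m div P)" by simp
  moreover have "w = w mod m + m * (w div m)" by simp
  ultimately show ?thesis by metis
qed

lemma decomp_bound:
  fixes a m lo P s N hi T :: nat
  assumes "a < m" "lo < P" "s < N" "hi < T"
  shows "a + m * (lo + P * (s + N * hi)) < m * (P * N * T)"
proof -
  have "s + N * hi < N * T"
  proof -
    have "s + N * hi < N * (hi + 1)" using assms by simp
    also have "\<dots> \<le> N * T" using assms by (intro mult_le_mono2) simp
    finally show ?thesis .
  qed
  then have "s + N * hi + 1 \<le> N * T" by simp
  have "lo + P * (s + N * hi) < P * (s + N * hi + 1)" using assms by simp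
  also have "\<dots> \<le> P * (N * T)" using \<open>s + N * hi + 1 \<le> N * T\<close> by (intro mult_le_mono2)
  finally have "lo + P * (s + N * hi) + 1 \<le> P * N * T" by (simp add: mult.assoc)
  have "a + m * (lo + P * (s + N * hi)) < m * (lo + P * (s + N * hi) + 1)" using assms by simp
  also have "\<dots> \<le> m * (P * N * T)" using \<open>lo + P * (s + N * hi) + 1 \<le> P * N * T\<close> by (intro mult_le_mono2)
  finally show ?thesis .
qed

lemma swp_eq:
  assumes "a < m" "lo < P" "s < D * R * m"
  shows "swp D R m P (x, y, a + m * (lo + P * (s + (D * R * m) * hi)))
       = (fst (dec D R s), fst (snd (dec D R s)),
          snd (snd (dec D R s)) + m * (lo + P * (enc D R (x, y, a) + (D * R * m) * hi)))"
  using decomp_parts[OF assms, of hi] by (simp add: swp_def Let_def)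

lemma Bas_decomp:
  assumes "(x, y, w) \<in> Bas D R (m * (P * (D * R * m) * T))" "P > 0"
  obtains a lo s hi where "w = a + m * (lo + P * (s + (D * R * m) * hi))"
    "a < m" "lo < P" "s < D * R * m" "hi < T"
proof -
  let ?N = "D * R * m"
  have w: "w < m * (P * ?N * T)" using assms by (simp add: mem_Bas)
  have pos1: "m > 0" using w by (cases "m = 0") simp_all
  have pos2: "?N > 0" using w by (cases "?N = 0") simp_all
  have pos3: "T > 0" using w by (cases "T = 0") simp_all
  note pos = pos1 pos2 pos3
  have hi: "w div m div P div ?N < T"
  proof -
    have "w div m < P * ?N * T" using w pos by (simp add: less_mult_imp_div_less mult.commute)
    then have "w div m div P < ?N * T" using assms(2)
      by (simp add: less_mult_imp_div_less mult.commute mult.left_commute)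
    then show ?thesis using pos by (simp add: less_mult_imp_div_less mult.commute)
  qed
  show ?thesis
    by (rule that[OF decomp_exists[OF pos(1) assms(2) pos(2)]]) (use pos assms(2) hi in auto)
qed

lemma swp_props:
  assumes "b \<in> Bas D R (m * (P * (D * R * m) * T))" "P > 0"
  shows "swp D R m P b \<in> Bas D R (m * (P * (D * R * m) * T))"
    and "swp D R m P (swp D R m P b) = b"
proof -
  let ?N = "D * R * m"
  obtain x y w where bb: "b = (x, y, w)" by (cases b) auto
  obtain a lo s hi where w: "w = a + m * (lo + P * (s + ?N * hi))"
    "a < m" "lo < P" "s < ?N" "hi < T"
    using Bas_decomp assms bb by blast
  have xyA: "(x, y, a) \<in> Bas D R m" using assms bb w by (auto simp: mem_Bas)
  have e: "enc D R (x, y, a) < ?N" using enc_lt[OF xyA] .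
  have ds: "dec D R s \<in> Bas D R m" using dec_in[OF w(4)] .
  obtain x' y' a' where d: "dec D R s = (x', y', a')" by (cases "dec D R s") auto
  have d': "x' \<ge> 1" "x' \<le> D" "y' < R" "a' < m" using ds d by (auto simp: mem_Bas)
  have sw: "swp D R m P b = (x', y', a' + m * (lo + P * (enc D R (x, y, a) + ?N * hi)))"
    using swp_eq[OF w(2,3,4)] bb w(1) d by simp
  show "swp D R m P b \<in> Bas D R (m * (P * (D * R * m) * T))"
    unfolding sw using decomp_bound[OF d'(4) w(3) e w(5)] d' by (simp add: mem_Bas)
  have "swp D R m P (swp D R m P b) = (fst (dec D R (enc D R (x, y, a))), fst (snd (dec D R (enc D R (x, y, a)))),
        snd (snd (dec D R (enc D R (x, y, a)))) + m * (lo + P * (enc D R (x', y', a') + ?N * hi)))"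
    unfolding sw by (rule swp_eq[OF d'(4) w(3) e])
  also have "\<dots> = b"
    using dec_enc[OF xyA] d enc_dec[OF w(4)] bb w(1) by simp
  finally show "swp D R m P (swp D R m P b) = b" .
qed

lemma Swap_Fm:
  assumes B: "B = Bas D R (m * (P * (D * R * m) * T))" and P: "P > 0" "R dvd P" and R: "R > 0"
    and Phi0: "\<And>u. u \<ge> P \<Longrightarrow> \<Phi> u = 0"
    and b: "b \<in> B"
  shows "apply_mat B (Perm (swp D R m P)) (Fm m R \<phi> \<Phi>) b
       = Fm m R (\<lambda>c. init_state)
           (\<lambda>u. if u < P * (D * R * m) then \<Phi> (u mod P) * \<phi> (u mod R) (dec D R (u div P)) else 0) b"
proof -
  let ?N = "D * R * m"
  have inj: "inj_on (swp D R m P) B"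
    by (rule inj_on_inverseI[where g = "swp D R m P"]) (use swp_props(2) B P in blast)
  have sb: "swp D R m P b \<in> B" using swp_props(1) B P b by blast
  have "apply_mat B (Perm (swp D R m P)) (Fm m R \<phi> \<Phi>) b = Fm m R \<phi> \<Phi> (swp D R m P b)"
    by (rule apply_Perm[OF _ inj sb]) (use B swp_props(2) P b in auto)
  also have "\<dots> = Fm m R (\<lambda>c. init_state)
           (\<lambda>u. if u < P * ?N then \<Phi> (u mod P) * \<phi> (u mod R) (dec D R (u div P)) else 0) b"
  proof -
    obtain x y w where bb: "b = (x, y, w)" by (cases b) auto
    obtain a lo s hi where w: "w = a + m * (lo + P * (s + ?N * hi))"
      "a < m" "lo < P" "s < ?N" "hi < T"
      using Bas_decomp b B P bb by blast
    have xyA: "(x, y, a) \<in> Bas D R m" using b B bb w by (auto simp: mem_Bas)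
    have e: "enc D R (x, y, a) < ?N" using enc_lt[OF xyA] .
    have ds: "dec D R s \<in> Bas D R m" using dec_in[OF w(4)] .
    obtain x' y' a' where d: "dec D R s = (x', y', a')" by (cases "dec D R s") auto
    have d': "a' < m" using ds d by (auto simp: mem_Bas)
    let ?s' = "enc D R (x, y, a)"
    let ?u' = "lo + P * (?s' + ?N * hi)"
    have sw: "swp D R m P b = (x', y', a' + m * ?u')"
      using swp_eq[OF w(2,3,4)] bb w(1) d by simp
    have p1: "(a' + m * ?u') mod m = a'" "(a' + m * ?u') div m = ?u'"
      using decomp_parts[OF d'(1) w(3) e] by auto
    have modR: "?u' mod R = lo mod R"
    proof -
      have "?u' mod R = (?u' mod P) mod R" by (rule mod_mod_cancel[symmetric, OF P(2)])
      also have "?u' mod P = lo" using decomp_parts[OF d'(1) w(3) e] by simp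
      finally show ?thesis .
    qed
    let ?u = "lo + P * (s + ?N * hi)"
    have pu: "w mod m = a" "w div m = ?u" "?u mod P = lo" "?u div P = s + ?N * hi"
      using decomp_parts[OF w(2,3,4)] w(1) by auto
    have uR: "?u mod R = lo mod R"
    proof -
      have "?u mod R = (?u mod P) mod R" by (rule mod_mod_cancel[symmetric, OF P(2)])
      then show ?thesis using pu by simp
    qed
    have LHS: "Fm m R \<phi> \<Phi> (swp D R m P b) = \<phi> (lo mod R) (dec D R s) * \<Phi> ?u'"
      unfolding sw using p1 modR d by (simp add: Fm_def)
    have RHS: "Fm m R (\<lambda>c. init_state)
           (\<lambda>u. if u < P * ?N then \<Phi> (u mod P) * \<phi> (u mod R) (dec D R (u div P)) else 0) b
        = init_state (x, y, a) * (if ?u < P * ?N then \<Phi> lo * \<phi> (lo mod R) (dec D R (s + ?N * hi)) else 0)"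
      using bb pu uR by (simp add: Fm_def)
    show ?thesis
    proof (cases "?s' = 0 \<and> hi = 0")
      case True
      then have "(x, y, a) = (1, 0, 0)" using enc_zero_iff[OF xyA] by simp
      moreover have "?u < P * ?N"
      proof -
        have "?u < P * (s + 1)" using True w(3) by simp
        also have "\<dots> \<le> P * ?N" using w(4) by (intro mult_le_mono2) simp
        finally show ?thesis .
      qed
      ultimately show ?thesis unfolding LHS RHS using True by (simp add: init_state_def)
    next
      case False
      have "?u' \<ge> P"
      proof -
        have "?s' + ?N * hi \<ge> 1" using False e by (cases hi) auto
        then have "P * 1 \<le> P * (?s' + ?N * hi)" by (intro mult_le_mono2)
        then show ?thesis by linarith
      qed
      then have l0: "\<Phi> ?u' = 0" using Phi0 by blast
      have r0: "init_state (x, y, a) * (if ?u < P * ?N then \<Phi> lo * \<phi> (lo mod R) (dec D R (s + ?N * hi)) else 0) = 0"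
      proof (cases "?s' = 0")
        case True
        then have "hi \<ge> 1" using False by simp
        then have "?u \<ge> P * ?N"
        proof -
          have "?N * 1 \<le> ?N * hi" using \<open>hi \<ge> 1\<close> by (intro mult_le_mono2)
          then have "s + ?N * hi \<ge> ?N" by linarith
          then have "P * ?N \<le> P * (s + ?N * hi)" by (intro mult_le_mono2)
          then show ?thesis by linarith
        qed
        then show ?thesis by simp
      next
        case False
        then have "(x, y, a) \<noteq> (1, 0, 0)" using enc_zero_iff[OF xyA] by simp
        then have "init_state (x, y, a) = 0" by (simp add: init_state_def)
        then show ?thesis by simp
      qed
      show ?thesis unfolding LHS RHS using l0 r0 by simp
    qed
  qed
  finally show ?thesis .
qed

definition HH :: "basis set \<Rightarrow> (basis \<Rightarrow> real) \<Rightarrow> qmat" where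
  "HH B v = (\<lambda>i j. complex_of_real ((if i = j then 1 else 0) - 2 * v i * v j / (\<Sum>b\<in>B. (v b)\<^sup>2)))"

lemma unitary_HH:
  assumes "finite B" "(\<Sum>b\<in>B. (v b)\<^sup>2) \<noteq> 0"
  shows "unitary_on B (HH B v)"
  unfolding unitary_on_def
proof (intro ballI)
  fix i j assume ij: "i \<in> B" "j \<in> B"
  let ?n = "\<Sum>b\<in>B. (v b)\<^sup>2"
  have "(\<Sum>k\<in>B. cnj (HH B v k i) * HH B v k j)
     = complex_of_real (\<Sum>k\<in>B. ((if k = i then 1 else 0) - 2 * v k * v i / ?n) * ((if k = j then 1 else 0) - 2 * v k * v j / ?n))"
    by (simp add: HH_def of_real_sum)
  also have "(\<Sum>k\<in>B. ((if k = i then 1 else 0) - 2 * v k * v i / ?n) * ((if k = j then 1 else 0) - 2 * v k * v j / ?n))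
     = (\<Sum>k\<in>B. (if k = i \<and> k = j then 1 else 0)) - (\<Sum>k\<in>B. (if k = i then 2 * v k * v j / ?n else 0))
       - (\<Sum>k\<in>B. (if k = j then 2 * v k * v i / ?n else 0)) + (\<Sum>k\<in>B. 4 * v i * v j / ?n ^ 2 * (v k)\<^sup>2)"
  proof -
    have pt: "((if k = i then 1 else 0) - 2 * v k * v i / ?n) * ((if k = j then 1 else 0) - 2 * v k * v j / ?n)
      = (if k = i \<and> k = j then 1 else 0) - (if k = i then 2 * v k * v j / ?n else 0)
       - (if k = j then 2 * v k * v i / ?n else 0) + 4 * v i * v j / ?n ^ 2 * (v k)\<^sup>2" for k
      by (cases "k = i"; cases "k = j") (simp_all add: algebra_simps power2_eq_square)
    show ?thesis unfolding pt by (simp add: sum_subtractf sum.distrib)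
  qed
  also have "\<dots> = (if i = j then 1 else 0) - 2 * v i * v j / ?n - 2 * v j * v i / ?n + 4 * v i * v j / ?n ^ 2 * ?n"
  proof -
    have "(\<Sum>k\<in>B. 4 * v i * v j / ?n ^ 2 * (v k)\<^sup>2) = 4 * v i * v j / ?n ^ 2 * ?n"
      by (simp add: sum_distrib_left)
    moreover have "(\<Sum>k\<in>B. (if k = i \<and> k = j then 1 else 0)) = (if i = j then (1::real) else 0)"
      using ij assms(1) by (cases "i = j") (simp_all add: sum.neutral)
    ultimately show ?thesis using ij assms(1) by simp
  qed
  also have "\<dots> = (if i = j then 1 else 0)"
    using assms(2) by (simp add: power2_eq_square field_simps)
  finally show "(\<Sum>k\<in>B. cnj (HH B v k i) * HH B v k j) = (if i = j then 1 else 0)" by simp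
qed


locale runs =
  fixes D R m :: nat and L :: "nat \<Rightarrow> nat" and rs :: "('o qalg \<times> nat set) list"
  assumes D0: "D > 0" and R2: "R \<ge> 2" and m0: "m > 0"
    and Lpos: "\<And>x. x \<in> {1..D} \<Longrightarrow> L x \<ge> 1"
    and valid: "\<And>A S. (A, S) \<in> set rs \<Longrightarrow> valid_qalg D R A \<and> ws A = m \<and> num_queries A \<ge> 1"
    and rs_ne: "rs \<noteq> []"
begin

definition "N = D * R * m"
definition "k = length rs"
definition "K = R * N ^ k"
definition "M = m * K"
definition "B = Bas D R M"
definition "BA = Bas D R m"

definition Lmod :: "nat set \<Rightarrow> nat \<Rightarrow> nat \<Rightarrow> nat" where
  "Lmod S c x = (if x \<in> S then (L x + c - 1) mod R + 1 else L x)"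

definition phi :: "nat \<Rightarrow> nat \<Rightarrow> qvec" where
  "phi j c = final_state D R (Lmod (snd (rs ! j)) c) (fst (rs ! j))"

fun Phi :: "nat \<Rightarrow> nat \<Rightarrow> complex" where
  "Phi 0 u = (if u < R then complex_of_real (1 / sqrt R) else 0)"
| "Phi (Suc j) u = (if u < R * N ^ j * N then Phi j (u mod (R * N ^ j)) * phi j (u mod R) (dec D R (u div (R * N ^ j))) else 0)"

definition Sh :: "nat set \<Rightarrow> qmat" where
  "Sh S = OrcG R (\<lambda>w x. if x \<in> S then (w div m) mod R else 0)"

definition SwapM :: "nat \<Rightarrow> qmat" where
  "SwapM j = Perm (swp D R m (R * N ^ j))"

fun post :: "nat \<Rightarrow> ('o qalg \<times> nat set) list \<Rightarrow> qmat" where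
  "post j [] = SwapM j"
| "post j (p # _) = mm B (Lift m (hd (ops (fst p)))) (SwapM j)"

fun build :: "nat \<Rightarrow> ('o qalg \<times> nat set) list \<Rightarrow> qmat list" where
  "build j [] = []"
| "build j (p # rest) =
     map (\<lambda>U. mm B (Lift m U) (Sh (snd p))) (butlast (tl (ops (fst p))))
     @ [mm B (post j rest) (mm B (Lift m (last (tl (ops (fst p))))) (Sh (snd p)))]
     @ build (Suc j) rest"

definition uvec :: "basis \<Rightarrow> real" where
  "uvec b = (case b of (x, y, w) \<Rightarrow> if x = 1 \<and> y = 0 \<and> w mod m = 0 \<and> w div m < R then 1 / sqrt R else 0)"

definition vH :: "basis \<Rightarrow> real" where
  "vH b = (if b = (1, 0, 0) then 1 else 0) - uvec b"

definition Prep :: qmat where "Prep = HH B vH"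

definition AsOps :: "qmat list" where
  "AsOps = mm B (Lift m (hd (ops (fst (rs ! 0))))) Prep # build 0 rs"

definition Aout :: "((nat \<Rightarrow> basis) \<Rightarrow> 'b) \<Rightarrow> basis \<Rightarrow> 'b" where
  "Aout G b = (case b of (x, y, w) \<Rightarrow> G (\<lambda>j. dec D R (((w div m) div (R * N ^ j)) mod N)))"

definition As :: "((nat \<Rightarrow> basis) \<Rightarrow> 'b) \<Rightarrow> 'b qalg" where
  "As G = \<lparr>ws = M, ops = AsOps, out = Aout G\<rparr>"

lemma R0: "R > 0" using R2 by simp
lemma N0: "N > 0" using D0 R0 m0 by (simp add: N_def)
lemma M_eq: "M = m * K" by (simp add: M_def)
lemma B_eq: "B = Bas D R (m * K)" by (simp add: B_def M_def)

lemma M_split: "j < k \<Longrightarrow> M = m * (R * N ^ j * N * N ^ (k - j - 1))"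
proof -
  assume "j < k"
  then have "N ^ k = N ^ (j + 1 + (k - j - 1))" by simp
  also have "\<dots> = N ^ j * N * N ^ (k - j - 1)" by (simp add: power_add)
  finally have "N ^ k = N ^ j * N * N ^ (k - j - 1)" .
  then show ?thesis by (simp add: M_def K_def mult.assoc)
qed

lemma Phi_zero: "u \<ge> R * N ^ j \<Longrightarrow> Phi j u = 0"
  by (cases j) (auto simp: mult_ac)

lemma Lmod_mod:
  assumes "x \<in> {1..D}"
  shows "Lmod S c x mod R = (L x + (if x \<in> S then c else 0)) mod R"
proof (cases "x \<in> S")
  case True
  have "L x \<ge> 1" using Lpos assms by blast
  then have "(L x + c - 1) mod R + 1 = (L x + c - 1) mod R + 1" by simp
  have "((L x + c - 1) mod R + 1) mod R = (L x + c - 1 + 1) mod R"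
    by (metis mod_add_left_eq)
  also have "L x + c - 1 + 1 = L x + c" using \<open>L x \<ge> 1\<close> by simp
  finally show ?thesis using True by (simp add: Lmod_def)
next
  case False
  then show ?thesis by (simp add: Lmod_def)
qed

lemma step_Fm:
  assumes v: "\<And>b. b \<in> B \<Longrightarrow> v b = Fm m R \<psi> \<Phi> b"
  shows "\<And>b. b \<in> B \<Longrightarrow> apply_mat B (mm B (Lift m U) (Sh S)) (apply_mat B (oracle_mat R L) v) b
      = Fm m R (\<lambda>c. apply_mat BA U (apply_mat BA (oracle_mat R (Lmod S c)) (\<psi> c))) \<Phi> b"
proof -
  fix b assume b: "b \<in> B"
  let ?H = "\<lambda>c x. L x + (if x \<in> S then c else 0)"
  have e1: "apply_mat B (Sh S) (apply_mat B (oracle_mat R L) v) b' =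
        Fm m R (\<lambda>c. apply_mat BA (oracle_mat R (Lmod S c)) (\<psi> c)) \<Phi> b'" if b': "b' \<in> B" for b'
  proof -
    obtain x' y' w' where bb: "b' = (x', y', w')" by (cases b') auto
    have "apply_mat B (Sh S) (apply_mat B (oracle_mat R L) v) b'
        = apply_mat B (OrcG R (\<lambda>w x. ?H ((w div m) mod R) x)) v b'"
      unfolding Sh_def oracle_OrcG B_def using OrcG_comp[OF R0 b'[unfolded B_def]]
      by (simp add: if_distrib cong: if_cong)
    also have "\<dots> = apply_mat B (OrcG R (\<lambda>w x. ?H ((w div m) mod R) x)) (Fm m R \<psi> \<Phi>) b'"
      by (simp only: apply_cong[OF v])
    also have "\<dots> = Fm m R (\<lambda>c. apply_mat BA (OrcG R (\<lambda>w x. ?H c x)) (\<psi> c)) \<Phi> b'"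
      unfolding B_eq BA_def bb by (rule OrcG_Fm[OF m0 R0 b'[unfolded B_eq bb]])
    also have "\<dots> = Fm m R (\<lambda>c. apply_mat BA (oracle_mat R (Lmod S c)) (\<psi> c)) \<Phi> b'"
    proof -
      have inA: "(x', y', w' mod m) \<in> Bas D R m" using b' bb m0 by (auto simp: B_eq mem_Bas)
      then have xD: "x' \<in> {1..D}" by (simp add: mem_Bas)
      have eq: "ysol R (?H c x') y'' = ysol R (Lmod S c x') y''" for c y''
      proof -
        have "ysol R (?H c x') y'' = ysol R (?H c x' mod R) y''" by (simp only: ysol_mod)
        also have "\<dots> = ysol R (Lmod S c x' mod R) y''" by (simp only: Lmod_mod[OF xD])
        also have "\<dots> = ysol R (Lmod S c x') y''" by (simp only: ysol_mod)
        finally show ?thesis .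
      qed
      have "apply_mat BA (OrcG R (\<lambda>w x. ?H c x)) (\<psi> c) (x', y', w' mod m)
          = apply_mat BA (oracle_mat R (Lmod S c)) (\<psi> c) (x', y', w' mod m)" for c
        unfolding BA_def oracle_OrcG apply_OrcG[OF R0 inA] eq ..
      then show ?thesis by (simp add: Fm_def bb)
    qed
    finally show ?thesis .
  qed
  have "apply_mat B (mm B (Lift m U) (Sh S)) (apply_mat B (oracle_mat R L) v) b
      = apply_mat B (Lift m U) (apply_mat B (Sh S) (apply_mat B (oracle_mat R L) v)) b"
    by (simp add: apply_mm B_def)
  also have "\<dots> = apply_mat B (Lift m U) (Fm m R (\<lambda>c. apply_mat BA (oracle_mat R (Lmod S c)) (\<psi> c)) \<Phi>) b"
    by (simp only: apply_cong[OF e1])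
  also have "\<dots> = Fm m R (\<lambda>c. apply_mat BA U (apply_mat BA (oracle_mat R (Lmod S c)) (\<psi> c))) \<Phi> b"
  proof -
    obtain x' y' w' where bb: "b = (x', y', w')" by (cases b) auto
    show ?thesis unfolding B_eq BA_def bb by (rule Lift_Fm[OF m0 b[unfolded B_eq bb]])
  qed
  finally show "apply_mat B (mm B (Lift m U) (Sh S)) (apply_mat B (oracle_mat R L) v) b
      = Fm m R (\<lambda>c. apply_mat BA U (apply_mat BA (oracle_mat R (Lmod S c)) (\<psi> c))) \<Phi> b" .
qed

lemma map_Fm:
  "(\<And>b. b \<in> B \<Longrightarrow> v b = Fm m R \<psi> \<Phi> b) \<Longrightarrow> b \<in> B \<Longrightarrow>
   run_ops B (oracle_mat R L) (map (\<lambda>U. mm B (Lift m U) (Sh S)) Us) v b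
   = Fm m R (\<lambda>c. run_ops BA (oracle_mat R (Lmod S c)) Us (\<psi> c)) \<Phi> b"
proof (induction Us arbitrary: v \<psi> b)
  case Nil
  then show ?case by simp
next
  case (Cons U Us)
  show ?case
    using Cons.IH[OF step_Fm[OF Cons.prems(1)] Cons.prems(2)] by simp
qed

lemma run_ops_snoc:
  "run_ops BB Orc (Us @ [X]) v = apply_mat BB X (apply_mat BB Orc (run_ops BB Orc Us v))"
  by (induction Us arbitrary: v) auto

lemma run_ops_append:
  "run_ops BB Orc (Us @ Vs) v = run_ops BB Orc Vs (run_ops BB Orc Us v)"
  by (induction Us arbitrary: v) auto

lemma rs_facts:
  assumes "j < k"
  shows "valid_qalg D R (fst (rs ! j))" "ws (fst (rs ! j)) = m" "num_queries (fst (rs ! j)) \<ge> 1"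
proof -
  have "rs ! j \<in> set rs" using assms by (simp add: k_def)
  then have "(fst (rs ! j), snd (rs ! j)) \<in> set rs" by simp
  then show "valid_qalg D R (fst (rs ! j))" "ws (fst (rs ! j)) = m" "num_queries (fst (rs ! j)) \<ge> 1"
    using valid by blast+
qed

lemma tl_ne: "j < k \<Longrightarrow> tl (ops (fst (rs ! j))) \<noteq> []"
proof -
  assume "j < k"
  then have "length (tl (ops (fst (rs ! j)))) \<ge> 1" using rs_facts(3)[of j] by (simp add: num_queries_def)
  then show ?thesis by (metis list.size(3) not_one_le_zero)
qed

lemma final_phi:
  assumes "j < k"
  shows "phi j c = apply_mat BA (last (tl (ops (fst (rs ! j)))))
     (apply_mat BA (oracle_mat R (Lmod (snd (rs ! j)) c))
       (run_ops BA (oracle_mat R (Lmod (snd (rs ! j)) c)) (butlast (tl (ops (fst (rs ! j)))))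
          (apply_mat BA (hd (ops (fst (rs ! j)))) init_state)))"
proof -
  let ?T = "tl (ops (fst (rs ! j)))"
  have e: "butlast ?T @ [last ?T] = ?T"
    using tl_ne[OF assms] by simp
  have "run_ops BA O' ?T v = run_ops BA O' (butlast ?T @ [last ?T]) v" for O' v
    by (simp only: e)
  then show ?thesis
    unfolding phi_def final_state_def Let_def rs_facts(2)[OF assms] BA_def
    by (simp only: run_ops_snoc)
qed

lemma one_run:
  assumes j: "j < k"
    and v: "\<And>b. b \<in> B \<Longrightarrow> v b = Fm m R (\<lambda>c. apply_mat BA (hd (ops (fst (rs ! j)))) init_state) (Phi j) b"
    and b: "b \<in> B"
  shows "run_ops B (oracle_mat R L)
     (map (\<lambda>U. mm B (Lift m U) (Sh (snd (rs ! j)))) (butlast (tl (ops (fst (rs ! j)))))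
      @ [mm B P (mm B (Lift m (last (tl (ops (fst (rs ! j)))))) (Sh (snd (rs ! j))))]) v b
   = apply_mat B P (Fm m R (phi j) (Phi j)) b"
proof -
  let ?A = "fst (rs ! j)" and ?S = "snd (rs ! j)"
  let ?v' = "run_ops B (oracle_mat R L) (map (\<lambda>U. mm B (Lift m U) (Sh ?S)) (butlast (tl (ops ?A)))) v"
  have v': "\<And>b. b \<in> B \<Longrightarrow> ?v' b = Fm m R (\<lambda>c. run_ops BA (oracle_mat R (Lmod ?S c)) (butlast (tl (ops ?A)))
        (apply_mat BA (hd (ops ?A)) init_state)) (Phi j) b"
    by (rule map_Fm[OF v])
  have st: "\<And>b. b \<in> B \<Longrightarrow> apply_mat B (mm B (Lift m (last (tl (ops ?A)))) (Sh ?S)) (apply_mat B (oracle_mat R L) ?v') b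
      = Fm m R (phi j) (Phi j) b"
  proof -
    have "phi j = (\<lambda>c. apply_mat BA (last (tl (ops ?A)))
     (apply_mat BA (oracle_mat R (Lmod ?S c))
       (run_ops BA (oracle_mat R (Lmod ?S c)) (butlast (tl (ops ?A)))
          (apply_mat BA (hd (ops ?A)) init_state))))"
      by (rule ext, rule final_phi[OF j])
    then show "\<And>b. b \<in> B \<Longrightarrow> apply_mat B (mm B (Lift m (last (tl (ops ?A)))) (Sh ?S)) (apply_mat B (oracle_mat R L) ?v') b
      = Fm m R (phi j) (Phi j) b"
      using step_Fm[OF v'] by simp
  qed
  show ?thesis
    unfolding run_ops_snoc apply_mm[OF finite_Bas[of D R M, folded B_def], of P]
    by (simp only: apply_cong[OF st])
qed

end


context runs begin

lemma finB: "finite B" by (simp add: B_def)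

lemma Swap_step:
  assumes j: "j < k" and b: "b \<in> B"
  shows "apply_mat B (SwapM j) (Fm m R (phi j) (Phi j)) b = Fm m R (\<lambda>c. init_state) (Phi (Suc j)) b"
proof -
  have BB: "B = Bas D R (m * (R * N ^ j * (D * R * m) * N ^ (k - j - 1)))"
    using M_split[OF j] by (simp add: B_def N_def)
  have P: "R * N ^ j > 0" "R dvd R * N ^ j" using R0 N0 by auto
  have "apply_mat B (SwapM j) (Fm m R (phi j) (Phi j)) b
      = Fm m R (\<lambda>c. init_state)
           (\<lambda>u. if u < R * N ^ j * (D * R * m) then Phi j (u mod (R * N ^ j)) * phi j (u mod R) (dec D R (u div (R * N ^ j))) else 0) b"
    unfolding SwapM_def by (rule Swap_Fm[OF BB P R0 Phi_zero b])
  also have "(\<lambda>u. if u < R * N ^ j * (D * R * m) then Phi j (u mod (R * N ^ j)) * phi j (u mod R) (dec D R (u div (R * N ^ j))) else 0)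
      = Phi (Suc j)"
    by (rule ext) (simp add: N_def)
  finally show ?thesis .
qed

lemma Lift_B:
  assumes "b \<in> B"
  shows "apply_mat B (Lift m U) (Fm m R \<psi> \<Phi>) b = Fm m R (\<lambda>c. apply_mat BA U (\<psi> c)) \<Phi> b"
proof -
  obtain x' y' w' where bb: "b = (x', y', w')" by (cases b) auto
  show ?thesis unfolding B_eq BA_def bb by (rule Lift_Fm[OF m0 assms[unfolded B_eq bb]])
qed

lemma build_run:
  "rest \<noteq> [] \<Longrightarrow> j + length rest = k \<Longrightarrow> rest = drop j rs \<Longrightarrow>
   (\<And>b. b \<in> B \<Longrightarrow> v b = Fm m R (\<lambda>c. apply_mat BA (hd (ops (fst (rs ! j)))) init_state) (Phi j) b) \<Longrightarrow>
   b \<in> B \<Longrightarrow> run_ops B (oracle_mat R L) (build j rest) v b = Fm m R (\<lambda>c. init_state) (Phi k) b"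
proof (induction rest arbitrary: j v b)
  case Nil
  then show ?case by simp
next
  case (Cons p rest')
  have j: "j < k" using Cons.prems(2) by simp
  have p: "p = rs ! j" using Cons.prems(3) j by (metis k_def Cons_nth_drop_Suc nth_Cons_0 list.inject)
  have rest': "rest' = drop (Suc j) rs" using Cons.prems(3) j by (metis k_def Cons_nth_drop_Suc list.inject)
  let ?v1 = "run_ops B (oracle_mat R L)
     (map (\<lambda>U. mm B (Lift m U) (Sh (snd (rs ! j)))) (butlast (tl (ops (fst (rs ! j)))))
      @ [mm B (post j rest') (mm B (Lift m (last (tl (ops (fst (rs ! j)))))) (Sh (snd (rs ! j))))]) v"
  have v1: "?v1 b' = apply_mat B (post j rest') (Fm m R (phi j) (Phi j)) b'" if "b' \<in> B" for b'
    by (rule one_run[OF j Cons.prems(4) that])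
  have eq: "run_ops B (oracle_mat R L) (build j (p # rest')) v = run_ops B (oracle_mat R L) (build (Suc j) rest') ?v1"
    unfolding p by (simp add: run_ops_append)
  show ?case
  proof (cases rest')
    case Nil
    have "Suc j = k" using Cons.prems(2) Nil by simp
    then show ?thesis unfolding eq using Nil v1[OF Cons.prems(5)] Swap_step[OF j Cons.prems(5)] by simp
  next
    case (Cons p' rest'')
    have j1: "Suc j < k" using Cons.prems(2) \<open>rest' = p' # rest''\<close> by simp
    have p': "p' = rs ! Suc j" using rest' Cons j1 by (metis k_def Cons_nth_drop_Suc nth_Cons_0 list.inject)
    have v1': "?v1 b' = Fm m R (\<lambda>c. apply_mat BA (hd (ops (fst (rs ! Suc j)))) init_state) (Phi (Suc j)) b'"
      if b': "b' \<in> B" for b'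
    proof -
      have "?v1 b' = apply_mat B (Lift m (hd (ops (fst p')))) (apply_mat B (SwapM j) (Fm m R (phi j) (Phi j))) b'"
        using v1[OF b'] Cons by (simp add: apply_mm[OF finB])
      also have "\<dots> = apply_mat B (Lift m (hd (ops (fst p')))) (Fm m R (\<lambda>c. init_state) (Phi (Suc j))) b'"
        by (simp only: apply_cong[OF Swap_step[OF j]])
      also have "\<dots> = Fm m R (\<lambda>c. apply_mat BA (hd (ops (fst p'))) init_state) (Phi (Suc j)) b'"
        by (rule Lift_B[OF b'])
      finally show ?thesis using p' by simp
    qed
    show ?thesis unfolding eq
      by (rule Cons.IH[OF _ _ rest' v1' Cons.prems(5)]) (use Cons.prems(2) \<open>rest' = p' # rest''\<close> in auto)
  qed
qed

lemma e0B: "(1, 0, 0) \<in> B"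
proof -
  have "K > 0" using R0 N0 by (simp add: K_def)
  then have "M > 0" using m0 by (simp add: M_def)
  then show ?thesis using D0 R0 by (simp add: B_def mem_Bas)
qed

lemma K_ge_R: "R \<le> K"
proof -
  have "N ^ k \<ge> 1" using N0 by simp
  then show ?thesis unfolding K_def by (metis mult_le_mono2 mult.right_neutral)
qed

lemma uvec_liftb:
  assumes "b \<in> BA"
  shows "uvec (liftb m u b) = (if b = (1, 0, 0) \<and> u < R then 1 / sqrt R else 0)"
proof -
  obtain x y a where bb: "b = (x, y, a)" by (cases b) auto
  have "a < m" using assms bb by (simp add: BA_def mem_Bas)
  then show ?thesis using bb by (simp add: uvec_def liftb_def)
qed

lemma sum_uvec_sq: "(\<Sum>b\<in>B. (uvec b)\<^sup>2) = 1"
proof -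
  have e0A: "(1, 0, 0) \<in> BA" using D0 R0 m0 by (simp add: BA_def mem_Bas)
  have "(\<Sum>b\<in>B. (uvec b)\<^sup>2) = (\<Sum>u<K. \<Sum>b\<in>BA. (uvec (liftb m u b))\<^sup>2)"
    unfolding B_eq BA_def by (rule sum_Bas_split[OF m0])
  also have "\<dots> = (\<Sum>u<K. if u < R then 1 / R else 0)"
  proof (intro sum.cong refl)
    fix u
    have "(\<Sum>b\<in>BA. (uvec (liftb m u b))\<^sup>2) = (\<Sum>b\<in>BA. if b = (1, 0, 0) then (if u < R then 1 / R else 0) else 0)"
      by (intro sum.cong refl) (auto simp: uvec_liftb power_divide R0)
    also have "\<dots> = (if u < R then 1 / R else 0)" using e0A by (simp add: BA_def)
    finally show "(\<Sum>b\<in>BA. (uvec (liftb m u b))\<^sup>2) = (if u < R then 1 / R else 0)" .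
  qed
  also have "\<dots> = (\<Sum>u<R. 1 / real R)"
  proof -
    have "{..<K} \<inter> {u. u < R} = {..<R}" using K_ge_R by auto
    then show ?thesis by (simp add: sum.If_cases)
  qed
  also have "\<dots> = 1" using R0 by simp
  finally show ?thesis .
qed

lemma uvec_e0: "uvec (1, 0, 0) = 1 / sqrt R"
  using R0 by (simp add: uvec_def)

lemma sqrtR: "sqrt R > 1"
  using R2 by simp

lemma sum_vH_sq: "(\<Sum>b\<in>B. (vH b)\<^sup>2) = 2 - 2 / sqrt R"
proof -
  have "(\<Sum>b\<in>B. (vH b)\<^sup>2) = (\<Sum>b\<in>B. (if b = (1, 0, 0) then 1 - 2 * uvec b else 0) + (uvec b)\<^sup>2)"
    by (intro sum.cong refl) (simp add: vH_def power2_eq_square algebra_simps)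
  also have "\<dots> = (1 - 2 * uvec (1, 0, 0)) + 1"
    using e0B finB by (simp add: sum.distrib sum_uvec_sq)
  finally show ?thesis unfolding uvec_e0 by simp
qed

lemma Prep_init:
  assumes "b \<in> B"
  shows "apply_mat B Prep init_state b = Fm m R (\<lambda>c. init_state) (Phi 0) b"
proof -
  let ?n = "\<Sum>b\<in>B. (vH b)\<^sup>2"
  have n: "?n = 2 * (1 - 1 / sqrt R)" using sum_vH_sq by simp
  have n0: "1 - 1 / sqrt R \<noteq> 0" using sqrtR by simp
  have ve0: "vH (1, 0, 0) = 1 - 1 / sqrt R" unfolding vH_def uvec_e0 by simp
  have "apply_mat B Prep init_state b = HH B vH b (1, 0, 0)"
    unfolding apply_mat_def init_state_def Prep_def using e0B finB
    by (simp add: if_distrib cong: if_cong)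
  also have "\<dots> = complex_of_real ((if b = (1, 0, 0) then 1 else 0) - vH b)"
  proof -
    have gen: "\<And>a t. t \<noteq> (0::real) \<Longrightarrow> 2 * a * t / (2 * t) = a" by simp
    have key: "2 * vH b * (1 - 1 / sqrt R) / (2 * (1 - 1 / sqrt R)) = vH b" by (rule gen[OF n0])
    show ?thesis unfolding HH_def n ve0 key ..
  qed
  also have "\<dots> = complex_of_real (uvec b)" by (simp add: vH_def)
  also have "\<dots> = Fm m R (\<lambda>c. init_state) (Phi 0) b"
  proof -
    obtain x y w where bb: "b = (x, y, w)" by (cases b) auto
    show ?thesis by (simp add: bb uvec_def Fm_def init_state_def)
  qed
  finally show ?thesis .
qed

theorem final_As:
  assumes "b \<in> B"
  shows "final_state D R L (As G) b = Fm m R (\<lambda>c. init_state) (Phi k) b"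
proof -
  have k0: "0 < k" using rs_ne by (simp add: k_def)
  let ?v0 = "apply_mat B (mm B (Lift m (hd (ops (fst (rs ! 0))))) Prep) init_state"
  have v0: "?v0 b' = Fm m R (\<lambda>c. apply_mat BA (hd (ops (fst (rs ! 0)))) init_state) (Phi 0) b'"
    if b': "b' \<in> B" for b'
  proof -
    have "?v0 b' = apply_mat B (Lift m (hd (ops (fst (rs ! 0))))) (apply_mat B Prep init_state) b'"
      by (simp add: apply_mm[OF finB])
    also have "\<dots> = apply_mat B (Lift m (hd (ops (fst (rs ! 0))))) (Fm m R (\<lambda>c. init_state) (Phi 0)) b'"
      by (simp only: apply_cong[OF Prep_init])
    also have "\<dots> = Fm m R (\<lambda>c. apply_mat BA (hd (ops (fst (rs ! 0)))) init_state) (Phi 0) b'"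
      by (rule Lift_B[OF b'])
    finally show ?thesis .
  qed
  have "final_state D R L (As G) = run_ops B (oracle_mat R L) (build 0 rs) ?v0"
    by (simp add: final_state_def As_def AsOps_def B_def Let_def)
  then show ?thesis
    using build_run[OF rs_ne _ _ v0 assms] by (simp add: k_def)
qed

end


context runs begin

definition pp :: "(nat \<Rightarrow> basis \<Rightarrow> bool) \<Rightarrow> nat \<Rightarrow> nat \<Rightarrow> real" where
  "pp Q i c = (\<Sum>b\<in>BA. if Q i b then (cmod (phi i c b))\<^sup>2 else 0)"

definition slot :: "nat \<Rightarrow> nat \<Rightarrow> basis" where
  "slot j u = dec D R ((u div (R * N ^ j)) mod N)"

lemma Aout_liftb:
  assumes "b \<in> BA"
  shows "Aout G (liftb m u b) = G (\<lambda>j. slot j u)"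
proof -
  obtain x y a where bb: "b = (x, y, a)" by (cases b) auto
  have "a < m" using assms bb by (simp add: BA_def mem_Bas)
  then show ?thesis using bb by (simp add: Aout_def liftb_def slot_def)
qed

lemma prob_As:
  "prob_out D R L (As G) P = (\<Sum>u<K. if P (G (\<lambda>j. slot j u)) then (cmod (Phi k u))\<^sup>2 else 0)"
proof -
  have e0A: "(1, 0, 0) \<in> BA" using D0 R0 m0 by (simp add: BA_def mem_Bas)
  have "prob_out D R L (As G) P = (\<Sum>b\<in>B. if P (Aout G b) then (cmod (Fm m R (\<lambda>c. init_state) (Phi k) b))\<^sup>2 else 0)"
  proof -
    have ws: "ws (As G) = M" "out (As G) = Aout G" by (simp_all add: As_def)
    show ?thesis unfolding prob_out_def ws B_def[symmetric] by (intro sum.cong refl) (simp add: final_As)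
  qed
  also have "\<dots> = (\<Sum>u<K. \<Sum>b\<in>BA. if P (Aout G (liftb m u b)) then (cmod (Fm m R (\<lambda>c. init_state) (Phi k) (liftb m u b)))\<^sup>2 else 0)"
    unfolding B_eq BA_def by (rule sum_Bas_split[OF m0])
  also have "\<dots> = (\<Sum>u<K. if P (G (\<lambda>j. slot j u)) then (cmod (Phi k u))\<^sup>2 else 0)"
  proof (intro sum.cong refl)
    fix u
    have "(\<Sum>b\<in>BA. if P (Aout G (liftb m u b)) then (cmod (Fm m R (\<lambda>c. init_state) (Phi k) (liftb m u b)))\<^sup>2 else 0)
        = (\<Sum>b\<in>BA. if b = (1, 0, 0) then (if P (G (\<lambda>j. slot j u)) then (cmod (Phi k u))\<^sup>2 else 0) else 0)"
      by (intro sum.cong refl) (auto simp: Aout_liftb Fm_liftb[unfolded BA_def[symmetric]] init_state_def BA_def)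
    also have "\<dots> = (if P (G (\<lambda>j. slot j u)) then (cmod (Phi k u))\<^sup>2 else 0)"
      using e0A by (simp add: BA_def)
    finally show "(\<Sum>b\<in>BA. if P (Aout G (liftb m u b)) then (cmod (Fm m R (\<lambda>c. init_state) (Phi k) (liftb m u b)))\<^sup>2 else 0)
        = (if P (G (\<lambda>j. slot j u)) then (cmod (Phi k u))\<^sup>2 else 0)" .
  qed
  finally show ?thesis .
qed

lemma slot_split:
  assumes "u1 < R * N ^ j" "s < N"
  shows "i < j \<Longrightarrow> slot i (u1 + R * N ^ j * s) = slot i u1"
    and "slot j (u1 + R * N ^ j * s) = dec D R s"
    and "(u1 + R * N ^ j * s) mod R = u1 mod R"
    and "Phi (Suc j) (u1 + R * N ^ j * s) = Phi j u1 * phi j (u1 mod R) (dec D R s)"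
proof -
  have P0: "R * N ^ j > 0" using R0 N0 by simp
  show "slot j (u1 + R * N ^ j * s) = dec D R s"
    using assms P0 by (simp add: slot_def)
  show mR: "(u1 + R * N ^ j * s) mod R = u1 mod R"
    by (simp add: mult.assoc)
  {
    assume i: "i < j"
    have e: "R * N ^ j * s = R * N ^ i * (N * (N ^ (j - i - 1) * s))"
    proof -
      have "N ^ j = N ^ i * N * N ^ (j - i - 1)"
      proof -
        have "N ^ j = N ^ (i + 1 + (j - i - 1))" using i by simp
        also have "\<dots> = N ^ i * N * N ^ (j - i - 1)" by (simp add: power_add)
        finally show ?thesis .
      qed
      then show ?thesis by (simp add: mult_ac)
    qed
    have "(u1 + R * N ^ j * s) div (R * N ^ i) = u1 div (R * N ^ i) + N * (N ^ (j - i - 1) * s)"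
      unfolding e using R0 N0 by simp
    then show "slot i (u1 + R * N ^ j * s) = slot i u1"
      by (simp add: slot_def)
  }
  have lt: "u1 + R * N ^ j * s < R * N ^ j * N"
  proof -
    have "u1 + R * N ^ j * s < R * N ^ j * (s + 1)" using assms by simp
    also have "\<dots> \<le> R * N ^ j * N" using assms by (intro mult_le_mono2) simp
    finally show ?thesis .
  qed
  show "Phi (Suc j) (u1 + R * N ^ j * s) = Phi j u1 * phi j (u1 mod R) (dec D R s)"
    using lt assms P0 mR by simp
qed

lemma prob_ind:
  assumes c: "c < R"
  shows "(\<Sum>u<R * N ^ j. if u mod R = c \<and> (\<forall>i<j. Q i (slot i u)) then (cmod (Phi j u))\<^sup>2 else 0)
       = (1 / R) * (\<Prod>i<j. pp Q i c)"
proof (induction j)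
  case 0
  have "(\<Sum>u<R. if u mod R = c then (cmod (Phi 0 u))\<^sup>2 else 0) = (\<Sum>u<R. if u = c then 1 / R else 0)"
  proof (intro sum.cong refl)
    fix u assume uR: "u \<in> {..<R}"
    have h1: "cmod (complex_of_real (1 / sqrt R)) = 1 / sqrt R" unfolding norm_of_real by simp
    have h2: "(1 / sqrt (real R))\<^sup>2 = 1 / R" using R0 by (simp add: power_divide)
    have "(cmod (complex_of_real (1 / sqrt R)))\<^sup>2 = 1 / R" unfolding h1 h2 ..
    then show "(if u mod R = c then (cmod (Phi 0 u))\<^sup>2 else 0) = (if u = c then 1 / R else 0)"
      using uR by auto
  qed
  also have "\<dots> = 1 / R" using c by simp
  finally show ?case by simp
next
  case (Suc j)
  let ?a = "R * N ^ j"
  have a0: "?a > 0" using R0 N0 by simp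
  have "(\<Sum>u<R * N ^ Suc j. if u mod R = c \<and> (\<forall>i<Suc j. Q i (slot i u)) then (cmod (Phi (Suc j) u))\<^sup>2 else 0)
      = (\<Sum>u1<?a. \<Sum>s<N. if (u1 + ?a * s) mod R = c \<and> (\<forall>i<Suc j. Q i (slot i (u1 + ?a * s)))
            then (cmod (Phi (Suc j) (u1 + ?a * s)))\<^sup>2 else 0)"
  proof -
    have e: "R * N ^ Suc j = ?a * N" by (simp add: mult_ac)
    show ?thesis unfolding e by (rule sum_nat_split[OF a0])
  qed
  also have "\<dots> = (\<Sum>u1<?a. \<Sum>s<N. (if u1 mod R = c \<and> (\<forall>i<j. Q i (slot i u1)) then (cmod (Phi j u1))\<^sup>2 else 0)
            * (if Q j (dec D R s) then (cmod (phi j c (dec D R s)))\<^sup>2 else 0))"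
  proof (intro sum.cong refl)
    fix u1 s assume u1: "u1 \<in> {..<?a}" and s: "s \<in> {..<N}"
    have ss: "\<And>i. i < j \<Longrightarrow> slot i (u1 + ?a * s) = slot i u1" "slot j (u1 + ?a * s) = dec D R s"
      "(u1 + ?a * s) mod R = u1 mod R" "Phi (Suc j) (u1 + ?a * s) = Phi j u1 * phi j (u1 mod R) (dec D R s)"
      using slot_split[of u1 j s] u1 s by auto
    have q: "(\<forall>i<Suc j. Q i (slot i (u1 + ?a * s))) \<longleftrightarrow> (\<forall>i<j. Q i (slot i u1)) \<and> Q j (dec D R s)"
      using ss(1,2) less_Suc_eq by auto
    show "(if (u1 + ?a * s) mod R = c \<and> (\<forall>i<Suc j. Q i (slot i (u1 + ?a * s)))
            then (cmod (Phi (Suc j) (u1 + ?a * s)))\<^sup>2 else 0)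
        = (if u1 mod R = c \<and> (\<forall>i<j. Q i (slot i u1)) then (cmod (Phi j u1))\<^sup>2 else 0)
            * (if Q j (dec D R s) then (cmod (phi j c (dec D R s)))\<^sup>2 else 0)"
      unfolding q ss(3,4) by (auto simp: norm_mult power_mult_distrib)
  qed
  also have "\<dots> = (\<Sum>u1<?a. (if u1 mod R = c \<and> (\<forall>i<j. Q i (slot i u1)) then (cmod (Phi j u1))\<^sup>2 else 0))
       * (\<Sum>s<N. if Q j (dec D R s) then (cmod (phi j c (dec D R s)))\<^sup>2 else 0)"
    by (simp add: sum_product)
  also have "(\<Sum>s<N. if Q j (dec D R s) then (cmod (phi j c (dec D R s)))\<^sup>2 else 0) = pp Q j c"
    unfolding pp_def BA_def N_def by (rule sum_dec)
  finally show ?case using Suc.IH by simp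
qed

lemma prob_As_ge:
  assumes "\<And>u. u < K \<Longrightarrow> (\<forall>i<k. Q i (slot i u)) \<Longrightarrow> P (G (\<lambda>j. slot j u))"
  shows "prob_out D R L (As G) P \<ge> (1 / R) * (\<Sum>c<R. \<Prod>i<k. pp Q i c)"
proof -
  have "(1 / R) * (\<Sum>c<R. \<Prod>i<k. pp Q i c)
      = (\<Sum>c<R. \<Sum>u<K. if u mod R = c \<and> (\<forall>i<k. Q i (slot i u)) then (cmod (Phi k u))\<^sup>2 else 0)"
    unfolding K_def using prob_ind by (simp add: sum_distrib_left)
  also have "\<dots> = (\<Sum>u<K. \<Sum>c<R. if u mod R = c \<and> (\<forall>i<k. Q i (slot i u)) then (cmod (Phi k u))\<^sup>2 else 0)"
    by (rule sum.swap)
  also have "\<dots> = (\<Sum>u<K. if (\<forall>i<k. Q i (slot i u)) then (cmod (Phi k u))\<^sup>2 else 0)"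
  proof (intro sum.cong refl)
    fix u
    have "(\<Sum>c<R. if u mod R = c \<and> (\<forall>i<k. Q i (slot i u)) then (cmod (Phi k u))\<^sup>2 else 0)
        = (\<Sum>c<R. if c = u mod R then (if (\<forall>i<k. Q i (slot i u)) then (cmod (Phi k u))\<^sup>2 else 0) else 0)"
      by (intro sum.cong refl) auto
    also have "\<dots> = (if (\<forall>i<k. Q i (slot i u)) then (cmod (Phi k u))\<^sup>2 else 0)"
      using R0 by simp
    finally show "(\<Sum>c<R. if u mod R = c \<and> (\<forall>i<k. Q i (slot i u)) then (cmod (Phi k u))\<^sup>2 else 0)
        = (if (\<forall>i<k. Q i (slot i u)) then (cmod (Phi k u))\<^sup>2 else 0)" .
  qed
  also have "\<dots> \<le> (\<Sum>u<K. if P (G (\<lambda>j. slot j u)) then (cmod (Phi k u))\<^sup>2 else 0)"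
    by (intro sum_mono) (use assms in auto)
  also have "\<dots> = prob_out D R L (As G) P" by (rule prob_As[symmetric])
  finally show ?thesis .
qed

end


context runs begin

lemma uSh: "unitary_on B (Sh S)"
  unfolding Sh_def B_def by (rule unitary_OrcG[OF R0])

lemma uLift:
  assumes "p \<in> set rs" "U \<in> set (ops (fst p))"
  shows "unitary_on B (Lift m U)"
proof -
  have "(fst p, snd p) \<in> set rs" using assms by simp
  then have "valid_qalg D R (fst p)" "ws (fst p) = m" using valid by blast+
  then have "unitary_on (Bas D R m) U" using assms(2) by (auto simp: valid_qalg_def)
  then show ?thesis unfolding B_eq by (rule unitary_Lift[OF m0])
qed

lemma uSwap:
  assumes j: "j < k"
  shows "unitary_on B (SwapM j)"
proof -
  have BB: "B = Bas D R (m * (R * N ^ j * (D * R * m) * N ^ (k - j - 1)))"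
    using M_split[OF j] by (simp add: B_def N_def)
  have P: "R * N ^ j > 0" using R0 N0 by auto
  have inj: "inj_on (swp D R m (R * N ^ j)) B"
    by (rule inj_on_inverseI[where g = "swp D R m (R * N ^ j)"]) (use swp_props(2) BB P in blast)
  show ?thesis unfolding SwapM_def
    by (rule unitary_Perm[OF finB _ inj]) (use swp_props(1) BB P in blast)
qed

lemma uPrep: "unitary_on B Prep"
proof -
  have "2 - 2 / sqrt R \<noteq> 0" using sqrtR by (simp add: field_simps)
  then show ?thesis unfolding Prep_def by (rule unitary_HH[OF finB, of vH, unfolded sum_vH_sq])
qed

lemma set_tl_sub: "set (tl xs) \<subseteq> set xs"
  by (cases xs) auto

lemma tl_ne_mem: "p \<in> set rs \<Longrightarrow> tl (ops (fst p)) \<noteq> []"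
proof -
  assume "p \<in> set rs"
  then have "(fst p, snd p) \<in> set rs" by simp
  then have "num_queries (fst p) \<ge> 1" using valid by blast
  then have "length (tl (ops (fst p))) \<ge> 1" by (simp add: num_queries_def)
  then show ?thesis by (metis list.size(3) not_one_le_zero)
qed

lemma u_build:
  "rest = drop j rs \<Longrightarrow> U \<in> set (build j rest) \<Longrightarrow> unitary_on B U"
proof (induction rest arbitrary: j)
  case Nil
  then show ?case by simp
next
  case (Cons p rest')
  have j: "j < k" using Cons.prems(1) by (metis k_def drop_all list.distinct(1) not_le_imp_less)
  have p: "p = rs ! j" using Cons.prems(1) j by (metis k_def Cons_nth_drop_Suc nth_Cons_0 list.inject)
  have rest': "rest' = drop (Suc j) rs" using Cons.prems(1) j by (metis k_def Cons_nth_drop_Suc list.inject)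
  have pin: "p \<in> set rs" using p j by (simp add: k_def)
  have tne: "tl (ops (fst p)) \<noteq> []" by (rule tl_ne_mem[OF pin])
  have fin: "finite B" by (rule finB)
  have upost: "unitary_on B (post j rest')"
  proof (cases rest')
    case Nil
    then show ?thesis using uSwap[OF j] by simp
  next
    case (Cons p' rest'')
    have j1: "Suc j < k" using rest' Cons by (metis k_def drop_all list.distinct(1) not_le_imp_less)
    have p': "p' = rs ! Suc j" using rest' Cons j1 by (metis k_def Cons_nth_drop_Suc nth_Cons_0 list.inject)
    have p'in: "p' \<in> set rs" using p' j1 by (simp add: k_def)
    have "ops (fst p') \<noteq> []" using tl_ne_mem[OF p'in] by auto
    then have "hd (ops (fst p')) \<in> set (ops (fst p'))" by simp
    then show ?thesis using Cons unitary_mm[OF fin uLift[OF p'in] uSwap[OF j]] by simp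
  qed
  from Cons.prems(2) consider
      (a) U' where "U' \<in> set (butlast (tl (ops (fst p))))" "U = mm B (Lift m U') (Sh (snd p))"
    | (b) "U = mm B (post j rest') (mm B (Lift m (last (tl (ops (fst p))))) (Sh (snd p)))"
    | (c) "U \<in> set (build (Suc j) rest')"
    by auto
  then show ?case
  proof cases
    case a
    have "U' \<in> set (tl (ops (fst p)))" using a(1) by (rule in_set_butlastD)
    then have "U' \<in> set (ops (fst p))" using set_tl_sub[of "ops (fst p)"] by (rule subsetD[rotated])
    then show ?thesis unfolding a(2) by (rule unitary_mm[OF fin uLift[OF pin] uSh])
  next
    case b
    have "last (tl (ops (fst p))) \<in> set (tl (ops (fst p)))" by (rule last_in_set[OF tne])
    then have "last (tl (ops (fst p))) \<in> set (ops (fst p))" using set_tl_sub[of "ops (fst p)"] by (rule subsetD[rotated])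
    then show ?thesis unfolding b by (rule unitary_mm[OF fin upost unitary_mm[OF fin uLift[OF pin] uSh]])
  next
    case c
    then show ?thesis by (rule Cons.IH[OF rest'])
  qed
qed

theorem valid_As: "valid_qalg D R (As G)"
proof -
  have "M \<ge> 1" using e0B by (simp add: B_def mem_Bas)
  moreover have "unitary_on (Bas D R M) U" if "U \<in> set AsOps" for U
  proof -
    have r0: "rs ! 0 \<in> set rs" using rs_ne by simp
    have "ops (fst (rs ! 0)) \<noteq> []" using tl_ne_mem[OF r0] by auto
    then have h: "hd (ops (fst (rs ! 0))) \<in> set (ops (fst (rs ! 0)))" by simp
    show ?thesis using that unitary_mm[OF finB uLift[OF r0 h] uPrep] u_build[of rs 0]
      by (auto simp: AsOps_def B_def)
  qed
  ultimately show ?thesis by (simp add: valid_qalg_def As_def AsOps_def)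
qed

lemma length_build:
  "set rest \<subseteq> set rs \<Longrightarrow> length (build j rest) = sum_list (map (\<lambda>p. num_queries (fst p)) rest)"
proof (induction rest arbitrary: j)
  case Nil
  then show ?case by simp
next
  case (Cons p rest')
  have "tl (ops (fst p)) \<noteq> []" using tl_ne_mem Cons.prems by simp
  then have "length (ops (fst p)) \<ge> 2" by (cases "ops (fst p)") (auto simp: Suc_le_eq)
  then have "length (butlast (tl (ops (fst p)))) + 1 = num_queries (fst p)"
    by (simp add: num_queries_def)
  then show ?case using Cons by simp
qed

theorem nq_As: "num_queries (As G) = sum_list (map (\<lambda>p. num_queries (fst p)) rs)"
  using length_build[of rs 0] by (simp add: num_queries_def As_def AsOps_def)

end


lemma set_tl_sub': "set (tl xs) \<subseteq> set xs"
  by (cases xs) auto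

lemma nrm_run_ops:
  assumes "finite BB" "\<forall>U\<in>set Us. unitary_on BB U" "unitary_on BB Orc"
  shows "nrm BB (run_ops BB Orc Us v) = nrm BB v"
  using assms(2)
proof (induction Us arbitrary: v)
  case Nil
  then show ?case by simp
next
  case (Cons U Us)
  then have "nrm BB (run_ops BB Orc Us (apply_mat BB U (apply_mat BB Orc v))) = nrm BB (apply_mat BB U (apply_mat BB Orc v))"
    by simp
  also have "\<dots> = nrm BB (apply_mat BB Orc v)" using nrm_unitary[OF assms(1)] Cons.prems by simp
  also have "\<dots> = nrm BB v" by (rule nrm_unitary[OF assms(1,3)])
  finally show ?case by simp
qed

lemma nrm_init:
  assumes "D > 0" "R > 0" "mm0 > 0"
  shows "nrm (Bas D R mm0) init_state = 1"
proof -
  have e0: "(1, 0, 0) \<in> Bas D R mm0" using assms by (simp add: mem_Bas)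
  have "nrm (Bas D R mm0) init_state = (\<Sum>b\<in>Bas D R mm0. if b = (1, 0, 0) then 1 else 0)"
    unfolding nrm_def init_state_def by (intro sum.cong refl) auto
  also have "\<dots> = 1" using e0 by simp
  finally show ?thesis .
qed

lemma nrm_final:
  assumes "valid_qalg D R A" "D > 0" "R > 0"
  shows "nrm (Bas D R (ws A)) (final_state D R L A) = 1"
proof -
  let ?B = "Bas D R (ws A)"
  have ne: "ops A \<noteq> []" and w: "ws A \<ge> 1" and u: "\<forall>U\<in>set (ops A). unitary_on ?B U"
    using assms(1) by (auto simp: valid_qalg_def)
  have fin: "finite ?B" by simp
  have utl: "\<forall>U\<in>set (tl (ops A)). unitary_on ?B U" using u set_tl_sub'[of "ops A"] by blast
  have uo: "unitary_on ?B (oracle_mat R L)" unfolding oracle_OrcG by (rule unitary_OrcG[OF assms(3)])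
  have uh: "unitary_on ?B (hd (ops A))" using u hd_in_set[OF ne] by blast
  have "nrm ?B (final_state D R L A) = nrm ?B (apply_mat ?B (hd (ops A)) init_state)"
    unfolding final_state_def Let_def by (rule nrm_run_ops[OF fin utl uo])
  also have "\<dots> = nrm ?B init_state" by (rule nrm_unitary[OF fin uh])
  also have "\<dots> = 1" by (rule nrm_init[OF assms(2,3)]) (use w in simp)
  finally show ?thesis .
qed

lemma prob_compl:
  assumes "valid_qalg D R A" "D > 0" "R > 0"
  shows "prob_out D R L A P + prob_out D R L A (\<lambda>r. \<not> P r) = 1"
proof -
  have "prob_out D R L A P + prob_out D R L A (\<lambda>r. \<not> P r) = nrm (Bas D R (ws A)) (final_state D R L A)"
    unfolding prob_out_def nrm_def sum.distrib[symmetric] by (intro sum.cong) auto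
  then show ?thesis using nrm_final[OF assms] by simp
qed

lemma prob_nonneg: "prob_out D R L A P \<ge> 0"
  unfolding prob_out_def by (intro sum_nonneg) auto

lemma prob_le1:
  assumes "valid_qalg D R A" "D > 0" "R > 0"
  shows "prob_out D R L A P \<le> 1"
  using prob_compl[OF assms, of L P] prob_nonneg[of D R L A "\<lambda>r. \<not> P r"] by simp

lemma lst0[simp]: "lst D L 0 x = L x" by (simp add: lst_def)
lemma lst1[simp]: "lst D L 1 x = L (x + D div 2)" by (simp add: lst_def)

lemma lang_witness:
  assumes "lang_1LD D R L"
  obtains x0 y0 where "x0 \<in> {1..D div 2}" "y0 \<in> {1..D div 2}" "L x0 = L (y0 + D div 2)"
    "\<And>p q. p \<in> {1..D div 2} \<Longrightarrow> q \<in> {1..D div 2} \<Longrightarrow> L p = L (q + D div 2) \<Longrightarrow> p = x0 \<and> q = y0"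
proof -
  let ?h = "D div 2"
  have e0: "lst D L 0 = L" and e1: "lst D L 1 = (\<lambda>x. L (x + ?h))" by (auto simp: lst_def)
  have "inj_on (lst D L 0) {1..?h}" "inj_on (lst D L 1) {1..?h}"
    using assms by (auto simp: lang_1LD_def inst_1LD_def)
  then have inj0: "inj_on L {1..?h}" and inj1: "inj_on (\<lambda>x. L (x + ?h)) {1..?h}"
    unfolding e0 e1 by auto
  have "card (lst_img D L 0 \<inter> lst_img D L 1) = 1" using assms by (simp add: lang_1LD_def)
  then obtain v where v: "lst_img D L 0 \<inter> lst_img D L 1 = {v}" by (rule card_1_singletonE)
  then have "v \<in> lst_img D L 0" "v \<in> lst_img D L 1" by auto
  then have "v \<in> L ` {1..?h}" "v \<in> (\<lambda>x. L (x + ?h)) ` {1..?h}" unfolding lst_img_def e0 e1 by auto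
  then obtain x0 y0 where x0: "x0 \<in> {1..?h}" "v = L x0" and y0: "y0 \<in> {1..?h}" "v = L (y0 + ?h)"
    by blast
  show ?thesis
  proof (rule that[OF x0(1) y0(1)])
    show "L x0 = L (y0 + ?h)" using x0 y0 by simp
    fix p q assume p: "p \<in> {1..?h}" and q: "q \<in> {1..?h}" and e: "L p = L (q + ?h)"
    have "L p \<in> L ` {1..?h}" by (rule imageI[OF p])
    moreover have "L p \<in> (\<lambda>x. L (x + ?h)) ` {1..?h}" using imageI[OF q, of "\<lambda>x. L (x + ?h)"] e by simp
    ultimately have "L p \<in> lst_img D L 0 \<inter> lst_img D L 1" unfolding lst_img_def e0 e1 by blast
    then have Lpv: "L p = v" using v by blast
    have "p = x0" using inj_onD[OF inj0 _ p x0(1)] Lpv x0(2) by simp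
    moreover have "q = y0" using inj_onD[OF inj1 _ q y0(1)] Lpv y0(2) e by simp
    ultimately show "p = x0 \<and> q = y0" by simp
  qed
qed

definition LM :: "nat \<Rightarrow> (nat \<Rightarrow> nat) \<Rightarrow> nat set \<Rightarrow> nat \<Rightarrow> nat \<Rightarrow> nat" where
  "LM R L S c x = (if x \<in> S then (L x + c - 1) mod R + 1 else L x)"

definition goodc :: "nat \<Rightarrow> nat \<Rightarrow> (nat \<Rightarrow> nat) \<Rightarrow> nat \<Rightarrow> bool" where
  "goodc D R L c \<longleftrightarrow> c < R \<and> (\<forall>a\<in>{1..D}. \<forall>b\<in>{1..D}. (L a + c) mod R \<noteq> L b mod R)"

lemma card_bad:
  assumes "R > 0"
  shows "card {c. c < R \<and> \<not> goodc D R L c} \<le> D * D"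
proof -
  have "{c. c < R \<and> \<not> goodc D R L c} \<subseteq> (\<lambda>(a, b). ysol R (L a) (L b mod R)) ` ({1..D} \<times> {1..D})"
  proof
    fix c assume "c \<in> {c. c < R \<and> \<not> goodc D R L c}"
    then obtain a b where ab: "a \<in> {1..D}" "b \<in> {1..D}" "(L a + c) mod R = L b mod R" "c < R"
      by (auto simp: goodc_def)
    have "ysol R (L a) (L b mod R) = c"
      by (rule ysol_unique[OF assms _ ab(4)]) (use ab assms in \<open>auto simp: add.commute\<close>)
    then show "c \<in> (\<lambda>(a, b). ysol R (L a) (L b mod R)) ` ({1..D} \<times> {1..D})" using ab by force
  qed
  then have "card {c. c < R \<and> \<not> goodc D R L c} \<le> card ((\<lambda>(a, b). ysol R (L a) (L b mod R)) ` ({1..D} \<times> {1..D}))"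
    by (intro card_mono) auto
  also have "\<dots> \<le> card ({1..D} \<times> {1..D})" by (rule card_image_le) simp
  also have "\<dots> = D * D" by (simp add: card_cartesian_product)
  finally show ?thesis .
qed

lemma mod_inj_1R:
  fixes x y R :: nat
  assumes "x \<in> {1..R}" "y \<in> {1..R}" "x mod R = y mod R"
  shows "x = y"
proof -
  have mx: "x mod R = (if x = R then 0 else x)"
  proof (cases "x = R")
    case False then have "x < R" using assms(1) by simp
    then show ?thesis using False by simp
  qed simp
  have my: "y mod R = (if y = R then 0 else y)"
  proof (cases "y = R")
    case False then have "y < R" using assms(2) by simp
    then show ?thesis using False by simp
  qed simp
  have "x \<ge> 1" "y \<ge> 1" using assms by auto
  then show ?thesis using assms(3) unfolding mx my by (cases "x = R"; cases "y = R") auto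
qed

lemma LM_mod:
  assumes "L x \<ge> 1"
  shows "LM R L S c x mod R = (L x + (if x \<in> S then c else 0)) mod R"
proof (cases "x \<in> S")
  case True
  have "((L x + c - 1) mod R + 1) mod R = (L x + c - 1 + 1) mod R"
    by (metis mod_add_left_eq)
  also have "L x + c - 1 + 1 = L x + c" using assms by simp
  finally show ?thesis using True by (simp add: LM_def)
next
  case False
  then show ?thesis by (simp add: LM_def)
qed

lemma LM_props:
  assumes L: "L \<in> {1..D} \<rightarrow>\<^sub>E {1..R}" and R0: "R > 0" and S: "S \<subseteq> {1..D}" and g: "goodc D R L c"
  shows "LM R L S c \<in> {1..D} \<rightarrow>\<^sub>E {1..R}"
    and "a \<in> {1..D} \<Longrightarrow> b \<in> {1..D} \<Longrightarrow> LM R L S c a = LM R L S c b \<longleftrightarrow> ((a \<in> S \<longleftrightarrow> b \<in> S) \<and> L a = L b)"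
proof -
  have inR: "LM R L S c x \<in> {1..R}" if x: "x \<in> {1..D}" for x
  proof (cases "x \<in> S")
    case True
    have "(L x + c - 1) mod R < R" using R0 by (rule mod_less_divisor)
    then show ?thesis using True by (simp add: LM_def)
  next
    case False
    then show ?thesis using PiE_mem[OF L x] by (simp add: LM_def)
  qed
  show "LM R L S c \<in> {1..D} \<rightarrow>\<^sub>E {1..R}"
  proof (rule PiE_I)
    show "LM R L S c x \<in> {1..R}" if "x \<in> {1..D}" for x using inR[OF that] .
    show "LM R L S c x = undefined" if "x \<notin> {1..D}" for x
    proof -
      have "x \<notin> S" using that S by blast
      then show ?thesis using PiE_arb[OF L that] by (simp add: LM_def)
    qed
  qed
  assume a: "a \<in> {1..D}" and b: "b \<in> {1..D}"
  have La: "L a \<in> {1..R}" and Lb: "L b \<in> {1..R}" using PiE_mem[OF L a] PiE_mem[OF L b] by auto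
  have LMa: "LM R L S c a \<in> {1..R}" and LMb: "LM R L S c b \<in> {1..R}" using inR a b by auto
  have "LM R L S c a = LM R L S c b \<longleftrightarrow> LM R L S c a mod R = LM R L S c b mod R"
    using mod_inj_1R[OF LMa LMb] by auto
  also have "\<dots> \<longleftrightarrow> (L a + (if a \<in> S then c else 0)) mod R = (L b + (if b \<in> S then c else 0)) mod R"
    using La Lb by (simp add: LM_mod)
  also have "\<dots> \<longleftrightarrow> ((a \<in> S \<longleftrightarrow> b \<in> S) \<and> L a = L b)"
  proof (cases "a \<in> S"; cases "b \<in> S")
    assume "a \<in> S" "b \<in> S"
    have "(L a + c) mod R = (L b + c) mod R \<longleftrightarrow> L a mod R = L b mod R"
    proof
      assume "(L a + c) mod R = (L b + c) mod R"
      then have "(L a mod R + c) mod R = (L b mod R + c) mod R" by (simp add: mod_add_left_eq)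
      then show "L a mod R = L b mod R" by (rule mod_add_inj[OF mod_less_divisor[OF R0] mod_less_divisor[OF R0]])
    next
      assume "L a mod R = L b mod R"
      then have "(L a mod R + c) mod R = (L b mod R + c) mod R" by simp
      then show "(L a + c) mod R = (L b + c) mod R" by (simp add: mod_add_left_eq)
    qed
    also have "\<dots> \<longleftrightarrow> L a = L b" using mod_inj_1R[OF La Lb] by auto
    finally show ?thesis using \<open>a \<in> S\<close> \<open>b \<in> S\<close> by simp
  next
    assume "a \<in> S" "b \<notin> S"
    then show ?thesis using g a b by (auto simp: goodc_def)
  next
    assume "a \<notin> S" "b \<in> S"
    have "(L b + c) mod R \<noteq> L a mod R" using g a b by (auto simp: goodc_def)
    then show ?thesis using \<open>a \<notin> S\<close> \<open>b \<in> S\<close> by auto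
  next
    assume "a \<notin> S" "b \<notin> S"
    then show ?thesis using mod_inj_1R[OF La Lb] by auto
  qed
  finally show "LM R L S c a = LM R L S c b \<longleftrightarrow> ((a \<in> S \<longleftrightarrow> b \<in> S) \<and> L a = L b)" .
qed


lemma LM_inst:
  assumes lang: "lang_1LD D R L" and R0: "R > 0" and S: "S \<subseteq> {1..D}" and g: "goodc D R L c"
    and Dh: "D = h + h" and h: "h = D div 2"
    and x0: "x0 \<in> {1..h}" and y0: "y0 \<in> {1..h}" and xy: "L x0 = L (y0 + h)"
    and uniq: "\<And>p q. p \<in> {1..h} \<Longrightarrow> q \<in> {1..h} \<Longrightarrow> L p = L (q + h) \<Longrightarrow> p = x0 \<and> q = y0"
  shows "inst_1LD D R (LM R L S c)" and "lang_1LD D R (LM R L S c) \<longleftrightarrow> (x0 \<in> S \<longleftrightarrow> y0 + h \<in> S)"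
proof -
  let ?L = "LM R L S c"
  have LP: "L \<in> {1..D} \<rightarrow>\<^sub>E {1..R}" using lang by (simp add: lang_1LD_def inst_1LD_def)
  have e0: "lst D L 0 = L" and e1: "lst D L 1 = (\<lambda>x. L (x + h))" using h by (auto simp: lst_def)
  have e0': "lst D ?L 0 = ?L" and e1': "lst D ?L 1 = (\<lambda>x. ?L (x + h))" using h by (auto simp: lst_def)
  have "inj_on (lst D L 0) {1..h}" "inj_on (lst D L 1) {1..h}"
    using lang h by (auto simp: lang_1LD_def inst_1LD_def)
  then have inj0: "inj_on L {1..h}" and inj1: "inj_on (\<lambda>x. L (x + h)) {1..h}"
    unfolding e0 e1 by auto
  have in0: "p \<in> {1..D}" if "p \<in> {1..h}" for p using that Dh by auto
  have in1: "p + h \<in> {1..D}" if "p \<in> {1..h}" for p using that Dh by auto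
  note eqv = LM_props(2)[OF LP R0 S g]
  have fL: "?L \<in> {1..D} \<rightarrow>\<^sub>E {1..R}" by (rule LM_props(1)[OF LP R0 S g])
  have i0: "inj_on (lst D ?L 0) {1..h}"
    unfolding e0'
  proof (rule inj_onI)
    fix p p' assume p: "p \<in> {1..h}" and p': "p' \<in> {1..h}" and e: "?L p = ?L p'"
    then have "L p = L p'" using eqv[OF in0[OF p] in0[OF p']] by simp
    then show "p = p'" using inj0 p p' by (auto dest: inj_onD)
  qed
  have i1: "inj_on (lst D ?L 1) {1..h}"
    unfolding e1'
  proof (rule inj_onI)
    fix p p' assume p: "p \<in> {1..h}" and p': "p' \<in> {1..h}" and e: "?L (p + h) = ?L (p' + h)"
    then have "L (p + h) = L (p' + h)" using eqv[OF in1[OF p] in1[OF p']] by simp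
    then show "p = p'" using inj1 p p' by (auto dest: inj_onD)
  qed
  let ?cond = "(x0 \<in> S \<longleftrightarrow> y0 + h \<in> S)"
  have I: "lst_img D ?L 0 \<inter> lst_img D ?L 1 = (if ?cond then {?L x0} else {})"
  proof
    show "lst_img D ?L 0 \<inter> lst_img D ?L 1 \<subseteq> (if ?cond then {?L x0} else {})"
    proof
      fix v assume "v \<in> lst_img D ?L 0 \<inter> lst_img D ?L 1"
      then obtain p q where p: "p \<in> {1..h}" and q: "q \<in> {1..h}" and vp: "v = ?L p" and vq: "v = ?L (q + h)"
        unfolding lst_img_def e0' e1' h[symmetric] by blast
      have "(p \<in> S \<longleftrightarrow> q + h \<in> S) \<and> L p = L (q + h)" using eqv[OF in0[OF p] in1[OF q]] vp vq by simp
      moreover then have "p = x0 \<and> q = y0" using uniq p q by blast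
      ultimately show "v \<in> (if ?cond then {?L x0} else {})" using vp by simp
    qed
    show "(if ?cond then {?L x0} else {}) \<subseteq> lst_img D ?L 0 \<inter> lst_img D ?L 1"
    proof (cases ?cond)
      case True
      have "?L x0 = ?L (y0 + h)" using eqv[OF in0[OF x0] in1[OF y0]] True xy by simp
      have "?L x0 \<in> ?L ` {1..h}" by (rule imageI[OF x0])
      moreover have "?L x0 \<in> (\<lambda>x. ?L (x + h)) ` {1..h}"
        using imageI[OF y0, of "\<lambda>x. ?L (x + h)"] \<open>?L x0 = ?L (y0 + h)\<close> by simp
      ultimately have "?L x0 \<in> lst_img D ?L 0" "?L x0 \<in> lst_img D ?L 1"
        unfolding lst_img_def e0' e1' h[symmetric] by auto
      then show ?thesis using True by simp
    qed simp
  qed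
  have card: "card (lst_img D ?L 0 \<inter> lst_img D ?L 1) = (if ?cond then 1 else 0)"
    unfolding I by simp
  have i0': "inj_on (lst D ?L 0) {1..D div 2}" and i1': "inj_on (lst D ?L 1) {1..D div 2}"
    using i0 i1 h by simp_all
  show "inst_1LD D R ?L" unfolding inst_1LD_def using fL i0' i1' card by simp
  show "lang_1LD D R ?L \<longleftrightarrow> ?cond" unfolding lang_1LD_def inst_1LD_def using fL i0' i1' card by simp
qed

lemma finite_lang: "finite {L. inst_1LD D R L}"
proof (rule finite_subset)
  show "{L. inst_1LD D R L} \<subseteq> {1..D} \<rightarrow>\<^sub>E {1..R}" by (auto simp: inst_1LD_def)
  show "finite ({1..D} \<rightarrow>\<^sub>E {1..R})" by (intro finite_PiE) auto
qed

lemma adv_bounds: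
  assumes valid: "valid_qalg D R A" and D0: "D > 0" and R0: "R > 0"
    and ex1: "\<exists>L. lang_1LD D R L" and ex0: "\<exists>L. inst_1LD D R L \<and> \<not> lang_1LD D R L"
  shows "lang_1LD D R L \<Longrightarrow> prob_out D R L A (\<lambda>r. r) \<ge> (1 + adv_1LD_d D R A) / 2"
    and "inst_1LD D R L \<Longrightarrow> \<not> lang_1LD D R L \<Longrightarrow> prob_out D R L A (\<lambda>r. r) \<le> (1 - adv_1LD_d D R A) / 2"
    and "adv_1LD_d D R A \<le> 1"
proof -
  let ?f = "\<lambda>L. prob_out D R L A (\<lambda>r. r)"
  let ?S1 = "{?f L | L. lang_1LD D R L}"
  let ?S0 = "{?f L | L. inst_1LD D R L \<and> \<not> lang_1LD D R L}"
  have f1: "finite ?S1"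
  proof -
    have "?S1 = ?f ` {L. lang_1LD D R L}" by auto
    moreover have "finite {L. lang_1LD D R L}"
      by (rule finite_subset[OF _ finite_lang[of D R]]) (auto simp: lang_1LD_def)
    ultimately show ?thesis by simp
  qed
  have f0: "finite ?S0"
  proof -
    have "?S0 = ?f ` {L. inst_1LD D R L \<and> \<not> lang_1LD D R L}" by auto
    moreover have "finite {L. inst_1LD D R L \<and> \<not> lang_1LD D R L}"
      by (rule finite_subset[OF _ finite_lang[of D R]]) auto
    ultimately show ?thesis by simp
  qed
  have adv1: "adv_1LD_d D R A \<le> 2 * Inf ?S1 - 1" and adv0: "adv_1LD_d D R A \<le> 1 - 2 * Sup ?S0"
    unfolding adv_1LD_d_def Let_def by auto
  show a: "lang_1LD D R L \<Longrightarrow> prob_out D R L A (\<lambda>r. r) \<ge> (1 + adv_1LD_d D R A) / 2" for L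
  proof -
    assume "lang_1LD D R L"
    then have "?f L \<in> ?S1" by auto
    then have "Inf ?S1 \<le> ?f L" using f1 by (intro cInf_lower) (auto intro: bdd_below_finite)
    then show ?thesis using adv1 by simp
  qed
  show "inst_1LD D R L \<Longrightarrow> \<not> lang_1LD D R L \<Longrightarrow> prob_out D R L A (\<lambda>r. r) \<le> (1 - adv_1LD_d D R A) / 2"
  proof -
    assume "inst_1LD D R L" "\<not> lang_1LD D R L"
    then have "?f L \<in> ?S0" by auto
    then have "?f L \<le> Sup ?S0" using f0 by (intro cSup_upper) (auto intro: bdd_above_finite)
    then show ?thesis using adv0 by simp
  qed
  obtain L1 where "lang_1LD D R L1" using ex1 by blast
  from a[OF this] prob_le1[OF valid D0 R0, of L1 "\<lambda>r. r"]
  show "adv_1LD_d D R A \<le> 1" by simp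
qed

lemma exists_lang:
  assumes "D = h + h" "h \<ge> 1" "R \<ge> D"
  shows "lang_1LD D R (\<lambda>x. if x \<in> {1..D} then (if x \<le> h then x else if x = h + 1 then 1 else x) else undefined)"
    (is "lang_1LD D R ?L")
proof -
  have h: "D div 2 = h" using assms by simp
  have e0: "lst D ?L 0 = ?L" and e1: "lst D ?L 1 = (\<lambda>x. ?L (x + h))" using h by (auto simp: lst_def)
  have L0: "?L p = p" if "p \<in> {1..h}" for p using that assms by simp
  have L1: "?L (p + h) = (if p = 1 then 1 else p + h)" if "p \<in> {1..h}" for p using that assms by simp
  have fL: "?L \<in> {1..D} \<rightarrow>\<^sub>E {1..R}"
  proof (rule PiE_I)
    show "?L x \<in> {1..R}" if "x \<in> {1..D}" for x using that assms by simp
    show "?L x = undefined" if "x \<notin> {1..D}" for x using that by auto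
  qed
  have i0: "inj_on (lst D ?L 0) {1..D div 2}" unfolding e0 h
  proof (rule inj_onI)
    fix p p' assume p: "p \<in> {1..h}" and p': "p' \<in> {1..h}" and e: "?L p = ?L p'"
    show "p = p'" using e L0[OF p] L0[OF p'] by simp
  qed
  have i1: "inj_on (lst D ?L 1) {1..D div 2}" unfolding e1 h
  proof (rule inj_onI)
    fix p p' assume p: "p \<in> {1..h}" and p': "p' \<in> {1..h}" and e: "?L (p + h) = ?L (p' + h)"
    have e': "(if p = 1 then 1 else p + h) = (if p' = 1 then 1 else p' + h)" using e L1[OF p] L1[OF p'] by simp
    show "p = p'"
    proof (cases "p = 1")
      case True
      then show ?thesis using e' p p' by (cases "p' = 1") auto
    next
      case False
      then show ?thesis using e' p p' by (cases "p' = 1") auto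
    qed
  qed
  have I: "lst_img D ?L 0 \<inter> lst_img D ?L 1 = {1}"
  proof
    show "lst_img D ?L 0 \<inter> lst_img D ?L 1 \<subseteq> {1}"
    proof
      fix v assume "v \<in> lst_img D ?L 0 \<inter> lst_img D ?L 1"
      then obtain p q where p: "p \<in> {1..h}" and q: "q \<in> {1..h}" and vp: "v = ?L p" and vq: "v = ?L (q + h)"
        unfolding lst_img_def e0 e1 h by blast
      have a: "v = p" using vp L0[OF p] by simp
      have b: "v = (if q = 1 then 1 else q + h)" using vq L1[OF q] by simp
      have "p \<le> h" using p by simp
      then show "v \<in> {1}" using a b q by (cases "q = 1") auto
    qed
    have o: "(1::nat) \<in> {1..h}" using assms by simp
    have "1 \<in> ?L ` {1..h}" using imageI[OF o, of ?L] L0[OF o] by simp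
    moreover have "1 \<in> (\<lambda>x. ?L (x + h)) ` {1..h}" using imageI[OF o, of "\<lambda>x. ?L (x + h)"] L1[OF o] by simp
    ultimately show "{1} \<subseteq> lst_img D ?L 0 \<inter> lst_img D ?L 1"
      unfolding lst_img_def e0 e1 h by blast
  qed
  show ?thesis unfolding lang_1LD_def inst_1LD_def using fL i0 i1 I by simp
qed

lemma exists_nonlang:
  assumes "D = h + h" "h \<ge> 1" "R \<ge> D"
  shows "inst_1LD D R (\<lambda>x. if x \<in> {1..D} then x else undefined) \<and> \<not> lang_1LD D R (\<lambda>x. if x \<in> {1..D} then x else undefined)"
    (is "inst_1LD D R ?L \<and> _")
proof -
  have h: "D div 2 = h" using assms by simp
  have e0: "lst D ?L 0 = ?L" and e1: "lst D ?L 1 = (\<lambda>x. ?L (x + h))" using h by (auto simp: lst_def)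
  have L0: "?L p = p" if "p \<in> {1..h}" for p using that assms by simp
  have L1: "?L (p + h) = p + h" if "p \<in> {1..h}" for p using that assms by simp
  have fL: "?L \<in> {1..D} \<rightarrow>\<^sub>E {1..R}"
  proof (rule PiE_I)
    show "?L x \<in> {1..R}" if "x \<in> {1..D}" for x using that assms by simp
    show "?L x = undefined" if "x \<notin> {1..D}" for x using that by auto
  qed
  have i0: "inj_on (lst D ?L 0) {1..D div 2}" unfolding e0 h
  proof (rule inj_onI)
    fix p p' assume p: "p \<in> {1..h}" and p': "p' \<in> {1..h}" and e: "?L p = ?L p'"
    show "p = p'" using e L0[OF p] L0[OF p'] by simp
  qed
  have i1: "inj_on (lst D ?L 1) {1..D div 2}" unfolding e1 h
  proof (rule inj_onI)
    fix p p' assume p: "p \<in> {1..h}" and p': "p' \<in> {1..h}" and e: "?L (p + h) = ?L (p' + h)"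
    show "p = p'" using e L1[OF p] L1[OF p'] by simp
  qed
  have I: "lst_img D ?L 0 \<inter> lst_img D ?L 1 = {}"
  proof -
    have "v \<notin> ?L ` {1..h} \<or> v \<notin> (\<lambda>x. ?L (x + h)) ` {1..h}" for v
    proof (rule ccontr)
      assume "\<not> ?thesis"
      then obtain p q where p: "p \<in> {1..h}" "v = ?L p" and q: "q \<in> {1..h}" "v = ?L (q + h)" by blast
      then show False using L0[OF p(1)] L1[OF q(1)] by simp
    qed
    then show ?thesis unfolding lst_img_def e0 e1 h by blast
  qed
  show ?thesis unfolding lang_1LD_def inst_1LD_def using fL i0 i1 I by simp
qed

lemma prod_ge_sum:
  fixes p :: "nat \<Rightarrow> real"
  assumes "\<And>i. i < n \<Longrightarrow> 0 \<le> p i \<and> p i \<le> 1"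
  shows "(\<Prod>i<n. p i) \<ge> 1 - (\<Sum>i<n. 1 - p i)"
  using assms
proof (induction n)
  case 0
  then show ?case by simp
next
  case (Suc n)
  have IH: "(\<Prod>i<n. p i) \<ge> 1 - (\<Sum>i<n. 1 - p i)" using Suc by simp
  have pn: "0 \<le> p n" "p n \<le> 1" using Suc.prems by auto
  have P1: "(\<Prod>i<n. p i) \<le> 1" using Suc.prems by (intro prod_le_1) auto
  have P0: "(\<Prod>i<n. p i) \<ge> 0" using Suc.prems by (intro prod_nonneg) auto
  have "(\<Prod>i<Suc n. p i) = (\<Prod>i<n. p i) * p n" by simp
  also have "\<dots> \<ge> (\<Prod>i<n. p i) - (1 - p n)"
  proof -
    have "(\<Prod>i<n. p i) * (1 - p n) \<le> 1 * (1 - p n)" using P1 pn by (intro mult_right_mono) auto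
    then show ?thesis by (simp add: algebra_simps)
  qed
  finally show ?case using IH by simp
qed

lemma prob_indep0:
  assumes "tl (ops A) = []"
  shows "prob_out D R L A P = prob_out D R L' A P"
proof -
  have "final_state D R L A = final_state D R L' A" using assms by (simp add: final_state_def Let_def)
  then show ?thesis by (simp only: prob_out_def)
qed


lemma bits_sum: "(\<Sum>i<e. if odd ((n::nat) div 2 ^ i) then 2 ^ i else 0) = n mod 2 ^ e"
proof (induction e)
  case 0
  then show ?case by simp
next
  case (Suc e)
  have "n mod 2 ^ Suc e = n mod (2 ^ e * 2)" by (simp add: mult.commute)
  also have "\<dots> = 2 ^ e * (n div 2 ^ e mod 2) + n mod 2 ^ e" by (rule mod_mult2_eq)
  also have "2 ^ e * (n div 2 ^ e mod 2) = (if odd (n div 2 ^ e) then 2 ^ e else 0)"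
    by (simp add: odd_iff_mod_2_eq_one mod2_eq_if)
  finally show ?case using Suc by simp
qed

lemma adv_s_ge:
  assumes ne: "\<exists>L. lang_1LD D R L"
    and h: "\<And>L. lang_1LD D R L \<Longrightarrow> prob_out D R L As (witness_1LD D L) \<ge> X"
  shows "adv_1LD_s D R As \<ge> X"
  unfolding adv_1LD_s_def
  by (rule cInf_greatest) (use ne h in auto)

lemma final_arith:
  fixes a X Dr Rr e pr :: real and cg :: nat
  assumes a1: "a \<le> 1" and e3: "e \<ge> 3" and Rr: "Rr > 0"
    and cg: "real cg \<ge> Rr - Dr" and Dr: "Dr \<ge> 0"
    and pr: "pr \<ge> (1 / Rr) * (real cg * max (1 - e * (1 - a)) 0)"
  shows "pr \<ge> 1 - Dr / Rr - 1.5 * ((e + 1) - 2) * (1 - a)"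
proof -
  let ?X = "1 - e * (1 - a)"
  have m0: "max ?X 0 \<ge> 0" by simp
  have "real cg * max ?X 0 \<ge> (Rr - Dr) * max ?X 0" using cg m0 by (rule mult_right_mono)
  then have "(1 / Rr) * (real cg * max ?X 0) \<ge> (1 / Rr) * ((Rr - Dr) * max ?X 0)"
    using Rr by (intro mult_left_mono) auto
  moreover have "(1 / Rr) * ((Rr - Dr) * max ?X 0) \<ge> ?X - Dr / Rr"
  proof (cases "?X \<ge> 0")
    case True
    have X1: "?X \<le> 1" using a1 e3 by (simp add: mult_nonneg_nonneg)
    have "(1 / Rr) * ((Rr - Dr) * ?X) = ?X - Dr / Rr * ?X" using Rr by (simp add: field_simps)
    moreover have "Dr / Rr * ?X \<le> Dr / Rr * 1"
      using X1 Dr Rr by (intro mult_left_mono) auto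
    ultimately show ?thesis using True by simp
  next
    case False
    have "Dr / Rr \<ge> 0" using Dr Rr by simp
    then show ?thesis using False by simp
  qed
  moreover have "?X - Dr / Rr \<ge> 1 - Dr / Rr - 1.5 * ((e + 1) - 2) * (1 - a)"
  proof -
    have "e * (1 - a) \<le> 1.5 * ((e + 1) - 2) * (1 - a)"
      using a1 e3 by (intro mult_right_mono) auto
    then show ?thesis by simp
  qed
  ultimately show ?thesis using pr by linarith
qed


definition Sx :: "nat \<Rightarrow> nat \<Rightarrow> nat set" where
  "Sx h i = {p \<in> {1..h}. odd ((p - 1) div 2 ^ i)}"

definition Sy :: "nat \<Rightarrow> nat \<Rightarrow> nat set" where
  "Sy h i = (\<lambda>p. p + h) ` Sx h i"

definition rsb :: "bool qalg \<Rightarrow> nat \<Rightarrow> nat \<Rightarrow> (bool qalg \<times> nat set) list" where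
  "rsb Ad h e = map (\<lambda>i. (Ad, Sx h i)) [0..<e] @ map (\<lambda>i. (Ad, Sy h i)) [0..<e]"

definition Gb :: "bool qalg \<Rightarrow> nat \<Rightarrow> (nat \<Rightarrow> basis) \<Rightarrow> nat \<times> nat" where
  "Gb Ad e sl = (1 + (\<Sum>i<e. if out Ad (sl i) then 0 else 2 ^ i), 1 + (\<Sum>i<e. if out Ad (sl (e + i)) then 0 else 2 ^ i))"

lemma rsb_len: "length (rsb Ad h e) = 2 * e"
  by (simp add: rsb_def)

lemma rsb_nth: "j < 2 * e \<Longrightarrow> rsb Ad h e ! j = (Ad, if j < e then Sx h j else Sy h (j - e))"
  by (auto simp: rsb_def nth_append)

lemma rsb_set: "p \<in> set (rsb Ad h e) \<Longrightarrow> fst p = Ad"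
  by (auto simp: rsb_def)

lemma runs_bits:
  assumes "D > 0" "R \<ge> 2" "valid_qalg D R Ad" "num_queries Ad \<ge> 1" "e \<ge> 1"
    "L \<in> {1..D} \<rightarrow>\<^sub>E {1..R}"
  shows "runs D R (ws Ad) L (rsb Ad h e)"
proof
  show "D > 0" "R \<ge> 2" using assms by auto
  show "ws Ad > 0" using assms(3) by (simp add: valid_qalg_def)
  show "L x \<ge> 1" if "x \<in> {1..D}" for x using PiE_mem[OF assms(6) that] by simp
  show "valid_qalg D R A \<and> ws A = ws Ad \<and> num_queries A \<ge> 1" if "(A, S) \<in> set (rsb Ad h e)" for A S
    using rsb_set[OF that] assms by simp
  show "rsb Ad h e \<noteq> []" using assms(5) by (simp add: rsb_def)
qed

lemma case_bits:
  assumes Dh: "D = h + h" and he: "h = 2 ^ e" and e3: "e \<ge> 3" and RD: "R \<ge> D"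
    and valid: "valid_qalg D R Ad" and nq: "num_queries Ad \<ge> 1"
    and lang: "lang_1LD D R L"
  shows "prob_out D R L (runs.As D R (ws Ad) (rsb Ad h e) (Gb Ad e)) (witness_1LD D L)
      \<ge> 1 - real D ^ 2 / R - 1.5 * ((real e + 1) - 2) * (1 - adv_1LD_d D R Ad)"
proof -
  let ?rs = "rsb Ad h e"
  let ?adv = "adv_1LD_d D R Ad"
  have h1: "h \<ge> 1" using he by simp
  have D0: "D > 0" using Dh h1 by simp
  have R2: "R \<ge> 2" using RD Dh h1 by simp
  have R0: "R > 0" using R2 by simp
  have hD: "D div 2 = h" using Dh by simp
  have LP: "L \<in> {1..D} \<rightarrow>\<^sub>E {1..R}" using lang by (simp add: lang_1LD_def inst_1LD_def)
  interpret r: runs D R "ws Ad" L ?rs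
    by (rule runs_bits[OF D0 R2 valid nq _ LP]) (use e3 in simp)
  have ex1: "\<exists>L. lang_1LD D R L" by (rule exI, rule exists_lang[OF Dh h1 RD])
  have ex0: "\<exists>L. inst_1LD D R L \<and> \<not> lang_1LD D R L" by (rule exI, rule exists_nonlang[OF Dh h1 RD])
  note advb = adv_bounds[OF valid D0 R0 ex1 ex0]
  obtain x0 y0 where x0: "x0 \<in> {1..h}" and y0: "y0 \<in> {1..h}" and xy: "L x0 = L (y0 + h)"
    and uniq: "\<And>p q. p \<in> {1..h} \<Longrightarrow> q \<in> {1..h} \<Longrightarrow> L p = L (q + h) \<Longrightarrow> p = x0 \<and> q = y0"
    by (rule lang_witness[OF lang, unfolded hD]) (rule that; assumption)
  define ex where "ex j = (if j < e then \<not> odd ((x0 - 1) div 2 ^ j) else \<not> odd ((y0 - 1) div 2 ^ (j - e)))" for j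
  define Q where "Q j b = (out Ad b = ex j)" for j b
  have k: "r.k = 2 * e" by (simp add: r.k_def rsb_len)
  have bnd: "prob_out D R L (r.As (Gb Ad e)) (witness_1LD D L) \<ge> (1 / R) * (\<Sum>c<R. \<Prod>i<r.k. r.pp Q i c)"
  proof (rule r.prob_As_ge)
    fix u assume all: "\<forall>i<r.k. Q i (r.slot i u)"
    have o1: "out Ad (r.slot i u) = (\<not> odd ((x0 - 1) div 2 ^ i))" if "i < e" for i
      using all that k by (auto simp: Q_def ex_def)
    have o2: "out Ad (r.slot (e + i) u) = (\<not> odd ((y0 - 1) div 2 ^ i))" if "i < e" for i
    proof -
      have "Q (e + i) (r.slot (e + i) u)" using all that k by simp
      then show ?thesis by (simp add: Q_def ex_def)
    qed
    have s1: "(\<Sum>i<e. if out Ad (r.slot i u) then 0 else 2 ^ i) = x0 - 1"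
    proof -
      have "(\<Sum>i<e. if out Ad (r.slot i u) then 0 else 2 ^ i) = (\<Sum>i<e. if odd ((x0 - 1) div 2 ^ i) then 2 ^ i else (0::nat))"
        by (intro sum.cong refl) (simp add: o1)
      also have "\<dots> = (x0 - 1) mod 2 ^ e" by (rule bits_sum)
      also have "\<dots> = x0 - 1"
      proof -
        have "x0 - 1 < 2 ^ e" using x0 he by auto
        then show ?thesis by simp
      qed
      finally show ?thesis .
    qed
    have s2: "(\<Sum>i<e. if out Ad (r.slot (e + i) u) then 0 else 2 ^ i) = y0 - 1"
    proof -
      have "(\<Sum>i<e. if out Ad (r.slot (e + i) u) then 0 else 2 ^ i) = (\<Sum>i<e. if odd ((y0 - 1) div 2 ^ i) then 2 ^ i else (0::nat))"
        by (intro sum.cong refl) (simp add: o2)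
      also have "\<dots> = (y0 - 1) mod 2 ^ e" by (rule bits_sum)
      also have "\<dots> = y0 - 1"
      proof -
        have "y0 - 1 < 2 ^ e" using y0 he by auto
        then show ?thesis by simp
      qed
      finally show ?thesis .
    qed
    have "Gb Ad e (\<lambda>j. r.slot j u) = (x0, y0)" using s1 s2 x0 y0 by (simp add: Gb_def)
    then show "witness_1LD D L (Gb Ad e (\<lambda>j. r.slot j u))"
      using x0 y0 xy hD by (simp add: witness_1LD_def lst_def)
  qed
  have Lmod_eq: "r.Lmod S c = LM R L S c" for S c
    by (rule ext) (simp add: r.Lmod_def LM_def)
  have pp_eq: "r.pp Q i c = prob_out D R (LM R L (snd (?rs ! i)) c) Ad (\<lambda>x. x = ex i)" if "i < 2 * e" for i c
  proof -
    have fA: "fst (?rs ! i) = Ad" using rsb_nth[OF that] by simp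
    show ?thesis
      unfolding r.pp_def r.phi_def prob_out_def r.BA_def Lmod_eq Q_def fA ..
  qed
  have pp01: "0 \<le> r.pp Q i c \<and> r.pp Q i c \<le> 1" if "i < 2 * e" for i c
    unfolding pp_eq[OF that] using prob_nonneg prob_le1[OF valid D0 R0] by auto
  have S_sub: "snd (?rs ! i) \<subseteq> {1..D}" if "i < 2 * e" for i
    using rsb_nth[OF that] Dh by (auto simp: Sx_def Sy_def)
  have cond: "(x0 \<in> snd (?rs ! i) \<longleftrightarrow> y0 + h \<in> snd (?rs ! i)) \<longleftrightarrow> ex i" if "i < 2 * e" for i
  proof (cases "i < e")
    case True
    have "y0 + h \<notin> Sx h i" using y0 h1 by (auto simp: Sx_def)
    moreover have "x0 \<in> Sx h i \<longleftrightarrow> odd ((x0 - 1) div 2 ^ i)" using x0 by (simp add: Sx_def)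
    moreover have "snd (?rs ! i) = Sx h i" using rsb_nth[OF that] True by simp
    moreover have "ex i = (\<not> odd ((x0 - 1) div 2 ^ i))" using True by (simp add: ex_def)
    ultimately show ?thesis by simp
  next
    case False
    have "x0 \<notin> Sy h (i - e)" using x0 by (auto simp: Sy_def Sx_def)
    moreover have "y0 + h \<in> Sy h (i - e) \<longleftrightarrow> odd ((y0 - 1) div 2 ^ (i - e))"
    proof -
      have inj: "inj (\<lambda>p::nat. p + h)" by (simp add: inj_def)
      have "y0 + h \<in> Sy h (i - e) \<longleftrightarrow> y0 \<in> Sx h (i - e)"
        unfolding Sy_def using inj_image_mem_iff[OF inj] by simp
      also have "\<dots> \<longleftrightarrow> odd ((y0 - 1) div 2 ^ (i - e))" using y0 by (simp add: Sx_def)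
      finally show ?thesis .
    qed
    moreover have "snd (?rs ! i) = Sy h (i - e)" using rsb_nth[OF that] False by simp
    moreover have "ex i = (\<not> odd ((y0 - 1) div 2 ^ (i - e)))" using False by (simp add: ex_def)
    ultimately show ?thesis by simp
  qed
  have ppgood: "r.pp Q i c \<ge> (1 + ?adv) / 2" if i: "i < 2 * e" and g: "goodc D R L c" for i c
  proof -
    let ?L' = "LM R L (snd (?rs ! i)) c"
    have inst: "inst_1LD D R ?L'" "lang_1LD D R ?L' \<longleftrightarrow> (x0 \<in> snd (?rs ! i) \<longleftrightarrow> y0 + h \<in> snd (?rs ! i))"
      by (rule LM_inst[OF lang R0 S_sub[OF i] g Dh hD[symmetric] x0 y0 xy], rule uniq, assumption+)+
    show ?thesis
    proof (cases "ex i")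
      case True
      then have "lang_1LD D R ?L'" using inst(2) cond[OF i] by simp
      then have "prob_out D R ?L' Ad (\<lambda>r. r) \<ge> (1 + ?adv) / 2" by (rule advb(1))
      moreover have "(\<lambda>x. x = ex i) = (\<lambda>r. r)" using True by auto
      ultimately show ?thesis unfolding pp_eq[OF i] by simp
    next
      case False
      then have "\<not> lang_1LD D R ?L'" using inst(2) cond[OF i] by simp
      then have "prob_out D R ?L' Ad (\<lambda>r. r) \<le> (1 - ?adv) / 2" by (rule advb(2)[OF inst(1)])
      moreover have "prob_out D R ?L' Ad (\<lambda>r. r) + prob_out D R ?L' Ad (\<lambda>r. \<not> r) = 1"
        by (rule prob_compl[OF valid D0 R0])
      moreover have "(\<lambda>x. x = ex i) = (\<lambda>r. \<not> r)" using False by auto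
      ultimately show ?thesis unfolding pp_eq[OF i] by simp
    qed
  qed
  let ?X = "1 - real e * (1 - ?adv)"
  have prodc: "(\<Prod>i<r.k. r.pp Q i c) \<ge> (if goodc D R L c then max ?X 0 else 0)" for c
  proof -
    have nn: "(\<Prod>i<r.k. r.pp Q i c) \<ge> 0" using pp01 k by (intro prod_nonneg) auto
    moreover have "goodc D R L c \<Longrightarrow> (\<Prod>i<r.k. r.pp Q i c) \<ge> ?X"
    proof -
      assume g: "goodc D R L c"
      have "(\<Prod>i<r.k. r.pp Q i c) \<ge> 1 - (\<Sum>i<r.k. 1 - r.pp Q i c)"
        by (rule prod_ge_sum) (use pp01 k in auto)
      moreover have "(\<Sum>i<r.k. 1 - r.pp Q i c) \<le> (\<Sum>i<r.k. (1 - ?adv) / 2)"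
        by (intro sum_mono) (use ppgood[OF _ g] k in force)
      moreover have "(\<Sum>i<r.k. (1 - ?adv) / 2) = real e * (1 - ?adv)" using k by simp
      ultimately show ?thesis by linarith
    qed
    ultimately show ?thesis by auto
  qed
  have sumc: "(\<Sum>c<R. \<Prod>i<r.k. r.pp Q i c) \<ge> real (card {c \<in> {..<R}. goodc D R L c}) * max ?X 0"
  proof -
    have "(\<Sum>c<R. \<Prod>i<r.k. r.pp Q i c) \<ge> (\<Sum>c<R. if goodc D R L c then max ?X 0 else 0)"
      by (rule sum_mono) (rule prodc)
    moreover have "(\<Sum>c<R. if goodc D R L c then max ?X 0 else 0) = real (card {c \<in> {..<R}. goodc D R L c}) * max ?X 0"
      by (simp add: sum.If_cases Int_def)
    ultimately show ?thesis by simp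
  qed
  have cg: "real (card {c \<in> {..<R}. goodc D R L c}) \<ge> real R - real D ^ 2"
  proof -
    have part: "card {c \<in> {..<R}. goodc D R L c} + card {c \<in> {..<R}. \<not> goodc D R L c} = R"
    proof -
      have "card ({c \<in> {..<R}. goodc D R L c} \<union> {c \<in> {..<R}. \<not> goodc D R L c}) = card {c \<in> {..<R}. goodc D R L c} + card {c \<in> {..<R}. \<not> goodc D R L c}"
        by (intro card_Un_disjoint) auto
      moreover have "{c \<in> {..<R}. goodc D R L c} \<union> {c \<in> {..<R}. \<not> goodc D R L c} = {..<R}" by auto
      ultimately show ?thesis by simp
    qed
    have "{c \<in> {..<R}. \<not> goodc D R L c} = {c. c < R \<and> \<not> goodc D R L c}" by auto
    then have "card {c \<in> {..<R}. \<not> goodc D R L c} \<le> D * D" using card_bad[OF R0, of D L] by simp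
    then have "real (card {c \<in> {..<R}. \<not> goodc D R L c}) \<le> real (D * D)" by (simp only: of_nat_le_iff)
    then have "real (card {c \<in> {..<R}. \<not> goodc D R L c}) \<le> real D ^ 2" by (simp add: power2_eq_square)
    moreover have "real (card {c \<in> {..<R}. goodc D R L c}) + real (card {c \<in> {..<R}. \<not> goodc D R L c}) = real R"
      using part by (metis of_nat_add)
    ultimately show ?thesis by linarith
  qed
  have a1: "?adv \<le> 1" by (rule advb(3))
  have pr: "prob_out D R L (r.As (Gb Ad e)) (witness_1LD D L)
      \<ge> (1 / real R) * (real (card {c \<in> {..<R}. goodc D R L c}) * max ?X 0)"
  proof -
    have "(1 / real R) * (\<Sum>c<R. \<Prod>i<r.k. r.pp Q i c) \<ge> (1 / real R) * (real (card {c \<in> {..<R}. goodc D R L c}) * max ?X 0)"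
      using sumc R0 by (intro mult_left_mono) auto
    then show ?thesis using bnd by linarith
  qed
  show ?thesis
    using final_arith[OF a1 _ _ cg _ pr] e3 R0 by simp
qed


definition tau :: "nat \<Rightarrow> basis \<Rightarrow> basis" where
  "tau i b = (if b = (1, 0, 0) then (i, 0, 0) else if b = (i, 0, 0) then (1, 0, 0) else b)"

definition Rd :: "nat \<Rightarrow> bool qalg" where
  "Rd i = \<lparr>ws = 1, ops = [Perm (tau i), Perm id], out = (\<lambda>_. False)\<rparr>"

definition rsf :: "nat \<Rightarrow> (bool qalg \<times> nat set) list" where
  "rsf D = map (\<lambda>i. (Rd (Suc i), {})) [0..<D]"

definition Gf :: "nat \<Rightarrow> (nat \<Rightarrow> basis) \<Rightarrow> nat \<times> nat" where
  "Gf h sl = (SOME w. fst w \<in> {1..h} \<and> snd w \<in> {1..h} \<and>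
      fst (snd (sl (fst w - 1))) = fst (snd (sl (snd w + h - 1))))"

lemma tau_inv: "tau i (tau i b) = b"
  by (auto simp: tau_def)

lemma tau_in: "i \<in> {1..D} \<Longrightarrow> b \<in> Bas D R 1 \<Longrightarrow> tau i b \<in> Bas D R 1"
  by (auto simp: tau_def mem_Bas)

lemma tau_inj: "inj_on (tau i) B"
  by (rule inj_on_inverseI[where g = "tau i"]) (rule tau_inv)

lemma id_inj: "inj_on id B" by simp

lemma valid_Rd:
  assumes "i \<in> {1..D}" "R > 0"
  shows "valid_qalg D R (Rd i)" "num_queries (Rd i) = 1" "ws (Rd i) = 1"
proof -
  have "unitary_on (Bas D R 1) (Perm (tau i))"
    by (rule unitary_Perm[OF finite_Bas _ tau_inj]) (rule tau_in[OF assms(1)])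
  moreover have "unitary_on (Bas D R 1) (Perm id)"
    by (rule unitary_Perm[OF finite_Bas _ id_inj]) simp
  ultimately show "valid_qalg D R (Rd i)" by (simp add: valid_qalg_def Rd_def)
  show "num_queries (Rd i) = 1" "ws (Rd i) = 1" by (simp_all add: num_queries_def Rd_def)
qed

lemma final_Rd:
  assumes i: "i \<in> {1..D}" and R0: "R > 0" and b: "(x, y, a) \<in> Bas D R 1"
  shows "final_state D R L' (Rd i) (x, y, a) = (if x = i \<and> y = L' i mod R then 1 else 0)"
proof -
  let ?B = "Bas D R 1"
  have a0: "a = 0" using b by (simp add: mem_Bas)
  have fs: "final_state D R L' (Rd i) = apply_mat ?B (Perm id) (apply_mat ?B (oracle_mat R L') (apply_mat ?B (Perm (tau i)) init_state))"
    by (simp add: final_state_def Rd_def Let_def)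
  have s1: "apply_mat ?B (Perm id) v (x, y, a) = v (x, y, a)" for v
    by (rule apply_Perm[OF finite_Bas id_inj b]) simp
  have b2: "(x, ysol R (L' x) y, a) \<in> ?B" using b R0 by (simp add: mem_Bas ysol_lt)
  have s2: "apply_mat ?B (oracle_mat R L') v (x, y, a) = v (x, ysol R (L' x) y, a)" for v
    unfolding oracle_OrcG by (rule apply_OrcG[OF R0 b])
  have s3: "apply_mat ?B (Perm (tau i)) init_state (x, ysol R (L' x) y, a) = init_state (tau i (x, ysol R (L' x) y, a))"
    by (rule apply_Perm[OF finite_Bas tau_inj tau_in[OF i b2]]) (rule tau_inv)
  have t: "tau i (x, ysol R (L' x) y, a) = (1, 0, 0) \<longleftrightarrow> (x, ysol R (L' x) y, a) = (i, 0, 0)"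
    by (metis tau_inv tau_def)
  have ys: "ysol R (L' x) y = 0 \<longleftrightarrow> y = L' x mod R"
  proof
    assume "ysol R (L' x) y = 0"
    then show "y = L' x mod R" using ysol_eq[OF R0, of y "L' x"] b by (simp add: mem_Bas)
  next
    assume "y = L' x mod R"
    then show "ysol R (L' x) y = 0" using ysol_unique[OF R0 _ R0, of y "L' x"] mod_less_divisor[OF R0] by simp
  qed
  show ?thesis unfolding fs s1 s2 s3 using t ys a0 by (auto simp: init_state_def)
qed

lemma runs_brute:
  assumes "D > 0" "R \<ge> 2" "L \<in> {1..D} \<rightarrow>\<^sub>E {1..R}"
  shows "runs D R 1 L (rsf D)"
proof
  show "D > 0" "R \<ge> 2" "(1::nat) > 0" using assms by auto
  show "L x \<ge> 1" if "x \<in> {1..D}" for x using PiE_mem[OF assms(3) that] by simp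
  show "valid_qalg D R A \<and> ws A = 1 \<and> num_queries A \<ge> 1" if AS: "(A, S) \<in> set (rsf D)" for A S
  proof -
    obtain j where j: "j < D" "A = Rd (Suc j)" using AS by (auto simp: rsf_def)
    have "Suc j \<in> {1..D}" using j by simp
    then show ?thesis using valid_Rd[of "Suc j" D R] assms j by simp
  qed
  show "rsf D \<noteq> []" using assms by (simp add: rsf_def)
qed

lemma case_brute:
  assumes Dh: "D = h + h" and h1: "h \<ge> 1" and RD: "R \<ge> D" and lang: "lang_1LD D R L"
  shows "prob_out D R L (runs.As D R 1 (rsf D) (Gf h)) (witness_1LD D L) \<ge> 1"
proof -
  have D0: "D > 0" using Dh h1 by simp
  have R2: "R \<ge> 2" using RD Dh h1 by simp
  have R0: "R > 0" using R2 by simp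
  have hD: "D div 2 = h" using Dh by simp
  have LP: "L \<in> {1..D} \<rightarrow>\<^sub>E {1..R}" using lang by (simp add: lang_1LD_def inst_1LD_def)
  interpret r: runs D R 1 L "rsf D" by (rule runs_brute[OF D0 R2 LP])
  obtain x0 y0 where x0: "x0 \<in> {1..h}" and y0: "y0 \<in> {1..h}" and xy: "L x0 = L (y0 + h)"
    and uniq: "\<And>p q. p \<in> {1..h} \<Longrightarrow> q \<in> {1..h} \<Longrightarrow> L p = L (q + h) \<Longrightarrow> p = x0 \<and> q = y0"
    by (rule lang_witness[OF lang, unfolded hD]) (rule that; assumption)
  define Q where "Q j (b::basis) = (fst (snd b) = L (Suc j) mod R)" for j b
  have k: "r.k = D" unfolding r.k_def by (simp add: rsf_def)
  have bnd: "prob_out D R L (r.As (Gf h)) (witness_1LD D L) \<ge> (1 / real R) * (\<Sum>c<R. \<Prod>i<r.k. r.pp Q i c)"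
  proof (rule r.prob_As_ge)
    fix u assume all: "\<forall>i<r.k. Q i (r.slot i u)"
    let ?sl = "\<lambda>j. r.slot j u"
    let ?P = "\<lambda>w. fst w \<in> {1..h} \<and> snd w \<in> {1..h} \<and> fst (snd (?sl (fst w - 1))) = fst (snd (?sl (snd w + h - 1)))"
    have sv: "fst (snd (?sl (p - 1))) = L p mod R" if "p \<in> {1..D}" for p
    proof -
      have "p - 1 < r.k" using that k by auto
      then have "Q (p - 1) (?sl (p - 1))" using all by blast
      moreover have "Suc (p - 1) = p" using that by auto
      ultimately show ?thesis by (simp add: Q_def)
    qed
    have Pchar: "?P w \<longleftrightarrow> fst w \<in> {1..h} \<and> snd w \<in> {1..h} \<and> L (fst w) = L (snd w + h)" for w
    proof -
      have "fst w \<in> {1..h} \<Longrightarrow> snd w \<in> {1..h} \<Longrightarrow>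
          (fst (snd (?sl (fst w - 1))) = fst (snd (?sl (snd w + h - 1)))) \<longleftrightarrow> L (fst w) = L (snd w + h)"
      proof -
        assume a: "fst w \<in> {1..h}" "snd w \<in> {1..h}"
        have m1: "fst w \<in> {1..D}" "snd w + h \<in> {1..D}" using a Dh by auto
        have "fst (snd (?sl (fst w - 1))) = L (fst w) mod R" using sv[OF m1(1)] .
        moreover have "fst (snd (?sl (snd w + h - 1))) = L (snd w + h) mod R" using sv[OF m1(2)] .
        moreover have "L (fst w) mod R = L (snd w + h) mod R \<longleftrightarrow> L (fst w) = L (snd w + h)"
          using mod_inj_1R[OF PiE_mem[OF LP m1(1)] PiE_mem[OF LP m1(2)]] by auto
        ultimately show ?thesis by simp
      qed
      then show ?thesis by blast
    qed
    have "?P (x0, y0)" using Pchar[of "(x0, y0)"] x0 y0 xy by simp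
    then have "?P (Gf h ?sl)" unfolding Gf_def by (rule someI)
    then have w: "fst (Gf h ?sl) \<in> {1..h}" "snd (Gf h ?sl) \<in> {1..h}" "L (fst (Gf h ?sl)) = L (snd (Gf h ?sl) + h)"
      using Pchar by blast+
    show "witness_1LD D L (Gf h ?sl)"
      using w hD by (auto simp: witness_1LD_def lst_def split: prod.splits)
  qed
  have Lmod0: "r.Lmod {} c = L" for c by (rule ext) (simp add: r.Lmod_def)
  have pp1: "r.pp Q i c = 1" if i: "i < D" for i c
  proof -
    have rs_i: "rsf D ! i = (Rd (Suc i), {})" using i by (simp add: rsf_def)
    have si: "Suc i \<in> {1..D}" using i by simp
    have pt: "(if Q i b then (cmod (final_state D R L (Rd (Suc i)) b))\<^sup>2 else 0)
          = (if b = (Suc i, L (Suc i) mod R, 0) then 1 else 0)" if b: "b \<in> Bas D R 1" for b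
    proof -
      obtain x y a where bb: "b = (x, y, a)" by (cases b) auto
      have a0: "a = 0" using b bb by (simp add: mem_Bas)
      show ?thesis
        using final_Rd[OF si R0 b[unfolded bb], of L] bb a0 by (auto simp: Q_def)
    qed
    have "r.pp Q i c = (\<Sum>b\<in>Bas D R 1. if b = (Suc i, L (Suc i) mod R, 0) then 1 else 0)"
      unfolding r.pp_def r.phi_def r.BA_def rs_i Lmod0 fst_conv snd_conv
      by (rule sum.cong[OF refl pt])
    also have "\<dots> = 1" using si R0 by (simp add: mem_Bas)
    finally show ?thesis .
  qed
  have "(\<Sum>c<R. \<Prod>i<r.k. r.pp Q i c) = real R" using pp1 k by simp
  then show ?thesis using bnd R0 by simp
qed


definition As0 :: "(nat \<times> nat) qalg" where
  "As0 = \<lparr>ws = 1, ops = [Perm id], out = (\<lambda>_. (0, 0))\<rparr>"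

lemma valid_As0: "valid_qalg D R As0" "num_queries As0 = 0"
proof -
  have "unitary_on (Bas D R 1) (Perm id)"
    by (rule unitary_Perm[OF finite_Bas _ id_inj]) simp
  then show "valid_qalg D R As0" by (simp add: valid_qalg_def As0_def)
  show "num_queries As0 = 0" by (simp add: num_queries_def As0_def)
qed

theorem lemma3:
  fixes D R q :: nat and Ad :: "bool qalg"
  assumes "\<exists>k. D = 2 ^ k" and "D \<ge> 4" and "R \<ge> D" and "q \<ge> 1"
    and "valid_qalg D R Ad" and "num_queries Ad \<le> q"
  shows "\<exists>As :: (nat \<times> nat) qalg. valid_qalg D R As \<and>
           real (num_queries As) \<le> 3 * real q * log 2 (real D) \<and>
           adv_1LD_s D R As \<ge> 1 - real D ^ 2 / real R
              - 1.5 * (log 2 (real D) - 2) * (1 - adv_1LD_d D R Ad)"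
proof -
  obtain t where Dt: "D = 2 ^ t" using assms(1) by blast
  have t2: "t \<ge> 2"
  proof (rule ccontr)
    assume "\<not> t \<ge> 2"
    then have "t \<le> 1" by simp
    then have "(2::nat) ^ t \<le> 2 ^ 1" by (intro power_increasing) auto
    then show False using assms(2) Dt by simp
  qed
  define h where "h = (2::nat) ^ (t - 1)"
  have Dh: "D = h + h"
  proof -
    have "(2::nat) ^ t = 2 ^ (Suc (t - 1))" using t2 by simp
    then show ?thesis using Dt by (simp add: h_def)
  qed
  have h1: "h \<ge> 1" by (simp add: h_def)
  have RD: "R \<ge> D" using assms(3) .
  have D0: "D > 0" using Dh h1 by simp
  have R0: "R > 0" using RD D0 by simp
  have valid: "valid_qalg D R Ad" using assms(5) .
  have logD: "log 2 (real D) = real t" using Dt by (simp add: log_pow_cancel)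
  let ?Ly = "\<lambda>x. if x \<in> {1..D} then (if x \<le> h then x else if x = h + 1 then 1 else x) else undefined"
  let ?Ln = "\<lambda>x::nat. if x \<in> {1..D} then x else undefined"
  have Ly: "lang_1LD D R ?Ly" by (rule exists_lang[OF Dh h1 RD])
  have Ln: "inst_1LD D R ?Ln \<and> \<not> lang_1LD D R ?Ln" by (rule exists_nonlang[OF Dh h1 RD])
  have ex1: "\<exists>L. lang_1LD D R L" using Ly by blast
  have ex0: "\<exists>L. inst_1LD D R L \<and> \<not> lang_1LD D R L" using Ln by blast
  note advb = adv_bounds[OF valid D0 R0 ex1 ex0]
  let ?adv = "adv_1LD_d D R Ad"
  have a1: "?adv \<le> 1" by (rule advb(3))
  have LyP: "?Ly \<in> {1..D} \<rightarrow>\<^sub>E {1..R}" using Ly by (simp add: lang_1LD_def inst_1LD_def)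
  have R2: "R \<ge> 2" using RD Dh h1 by simp
  show ?thesis unfolding logD
  proof (cases "t \<le> 3")
    case True
    let ?As = "runs.As D R 1 (rsf D) (Gf h)"
    interpret r: runs D R 1 ?Ly "rsf D" by (rule runs_brute[OF D0 R2 LyP])
    have v: "valid_qalg D R ?As" by (rule r.valid_As)
    have "num_queries ?As = sum_list (map (\<lambda>p. num_queries (fst p)) (rsf D))" by (rule r.nq_As)
    also have "\<dots> = D"
    proof -
      have "map (\<lambda>p. num_queries (fst p)) (rsf D) = map (\<lambda>i. 1) [0..<D]"
        unfolding rsf_def using valid_Rd(2)[OF _ R0] by (auto simp: nth_equalityI)
      then show ?thesis by (simp add: sum_list_triv)
    qed
    finally have nq: "num_queries ?As = D" .
    have nqb: "real (num_queries ?As) \<le> 3 * real q * real t"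
    proof -
      have q1: "real q \<ge> 1" using assms(4) by simp
      have "t = 2 \<or> t = 3" using True t2 by auto
      then show ?thesis
      proof
        assume "t = 2" then show ?thesis using nq Dt q1 by simp
      next
        assume "t = 3" then show ?thesis using nq Dt q1 by simp
      qed
    qed
    have adv: "adv_1LD_s D R ?As \<ge> 1"
      by (rule adv_s_ge[OF ex1]) (rule case_brute[OF Dh h1 RD])
    have "1 - real D ^ 2 / real R - 1.5 * (real t - 2) * (1 - ?adv) \<le> 1"
    proof -
      have "0 \<le> 1.5 * (real t - 2) * (1 - ?adv)" using t2 a1 by (intro mult_nonneg_nonneg) auto
      moreover have "0 \<le> real D ^ 2 / real R" by simp
      ultimately show ?thesis by linarith
    qed
    then have fin: "1 - real D ^ 2 / real R - 1.5 * (real t - 2) * (1 - ?adv) \<le> adv_1LD_s D R ?As"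
      using adv by linarith
    show "\<exists>As :: (nat \<times> nat) qalg. valid_qalg D R As \<and> real (num_queries As) \<le> 3 * real q * real t \<and>
        1 - real D ^ 2 / real R - 1.5 * (real t - 2) * (1 - ?adv) \<le> adv_1LD_s D R As"
      using v nqb fin by blast
  next
    case False
    then have t4: "t \<ge> 4" by simp
    show "\<exists>As :: (nat \<times> nat) qalg. valid_qalg D R As \<and> real (num_queries As) \<le> 3 * real q * real t \<and>
        1 - real D ^ 2 / real R - 1.5 * (real t - 2) * (1 - ?adv) \<le> adv_1LD_s D R As"
    proof (cases "num_queries Ad = 0")
      case True
      have "length (tl (ops Ad)) = 0" using True by (simp add: num_queries_def)
      then have "tl (ops Ad) = []" by (simp only: length_0_conv)
      then have same: "prob_out D R ?Ly Ad (\<lambda>r. r) = prob_out D R ?Ln Ad (\<lambda>r. r)" by (rule prob_indep0)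
      have "prob_out D R ?Ly Ad (\<lambda>r. r) \<ge> (1 + ?adv) / 2" by (rule advb(1)[OF Ly])
      moreover have "prob_out D R ?Ln Ad (\<lambda>r. r) \<le> (1 - ?adv) / 2" using advb(2) Ln by blast
      ultimately have a0: "?adv \<le> 0" using same by simp
      have adv: "adv_1LD_s D R As0 \<ge> 0"
        by (rule adv_s_ge[OF ex1]) (rule prob_nonneg)
      have "1 - real D ^ 2 / real R - 1.5 * (real t - 2) * (1 - ?adv) \<le> 0"
      proof -
        have "1.5 * (real t - 2) * (1 - ?adv) \<ge> 1.5 * 2 * 1"
          using t4 a0 by (intro mult_mono) auto
        moreover have "0 \<le> real D ^ 2 / real R" by simp
        ultimately show ?thesis by linarith
      qed
      then have fin: "1 - real D ^ 2 / real R - 1.5 * (real t - 2) * (1 - ?adv) \<le> adv_1LD_s D R As0"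
        using adv by linarith
      have nqb: "real (num_queries As0) \<le> 3 * real q * real t" using valid_As0(2) by simp
      show ?thesis using valid_As0(1)[of D R] nqb fin by blast
    next
      case False
      then have nA: "num_queries Ad \<ge> 1" by simp
      define e where "e = t - 1"
      have he: "h = 2 ^ e" by (simp add: h_def e_def)
      have e3: "e \<ge> 3" using t4 by (simp add: e_def)
      let ?As = "runs.As D R (ws Ad) (rsb Ad h e) (Gb Ad e)"
      interpret r: runs D R "ws Ad" ?Ly "rsb Ad h e"
        by (rule runs_bits[OF D0 R2 valid nA _ LyP]) (use e3 in simp)
      have v: "valid_qalg D R ?As" by (rule r.valid_As)
      have "num_queries ?As = sum_list (map (\<lambda>p. num_queries (fst p)) (rsb Ad h e))" by (rule r.nq_As)
      also have "\<dots> = 2 * e * num_queries Ad" by (simp add: rsb_def comp_def sum_list_triv)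
      finally have nq: "num_queries ?As = 2 * e * num_queries Ad" .
      have nqb: "real (num_queries ?As) \<le> 3 * real q * real t"
      proof -
        have "num_queries ?As \<le> 2 * e * q" unfolding nq using assms(6) by simp
        also have "2 * e * q \<le> 3 * q * t"
        proof -
          have "2 * e \<le> 3 * t" by (simp add: e_def)
          then have "2 * e * q \<le> 3 * t * q" by (rule mult_le_mono1)
          then show ?thesis by (simp add: mult_ac)
        qed
        finally show ?thesis by (metis of_nat_le_iff of_nat_mult of_nat_numeral)
      qed
      have adv: "adv_1LD_s D R ?As \<ge> 1 - real D ^ 2 / R - 1.5 * ((real e + 1) - 2) * (1 - ?adv)"
        by (rule adv_s_ge[OF ex1]) (rule case_bits[OF Dh he e3 RD valid nA])
      have "real e + 1 = real t" using t4 by (simp add: e_def)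
      then have fin: "1 - real D ^ 2 / real R - 1.5 * (real t - 2) * (1 - ?adv) \<le> adv_1LD_s D R ?As"
        using adv by simp
      show ?thesis using v nqb fin by blast
    qed
  qed
qed


end
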